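(* Let $(T_n)_{n\ge0}$ be the uniform random recursive tree process and, for $k\ge1$, $0<t<1$ and $n\ge1$, let \[ Z_{n,k}(t)=\frac{1}{|L_n(k)|}\,\bigl|\{i\le n:\ i\in L_n(k),\ \deg_n(i)>t\log n\}\bigr| \] be the proportion of vertices in level $k$ of $T_n$ whose degree exceeds $t\log n$ (with $Z_{n,k}(t)$ defined arbitrarily when $L_n(k)=\emptyset$). Then for every integer $k\ge1$ and every $t\in(0,1)$, \[ \lim_{n\to\infty} Z_{n,k}(t)=(1-t)^k\quad\text{almost surely.} \]
   Context: Uniform random recursive tree: start at step $0$ with the tree $T_0$ consisting of the single vertex $0$ (the root). At step $n\ge1$, a vertex is chosen uniformly at random among the existing vertices $0,1,\dots,n-1$, independently of the past, and a new vertex $n$ is added and joined by an edge to the chosen vertex; $T_n$ denotes the resulting tree on vertices $0,1,\dots,n$. $\deg_n(i)$ denotes the degree (number of incident edges) of vertex $i$ in $T_n$, for $i\le n$. Level $k$ of $T_n$, denoted $L_n(k)$, is the set of vertices of $T_n$ at graph distance exactly $k$ from the root $0$. $\log$ is the natural logarithm. *)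

theory Defs
  imports "HOL-Probability.Probability"
begin

text \<open>A sample point is a sequence
  \<omega> :: nat \<Rightarrow> nat, where \<omega> m is the vertex chosen at step m+1
  (uniform on {0..m}, independently).  So vertex m+1 is attached to \<omega> m.\<close>

definition RRT :: "(nat \<Rightarrow> nat) measure" where
  "RRT = (\<Pi>\<^sub>M m\<in>UNIV. measure_pmf (pmf_of_set {0..m}))"

text \<open>Parent of vertex j \<ge> 1 (the min only matters off the support).\<close>
definition par :: "(nat \<Rightarrow> nat) \<Rightarrow> nat \<Rightarrow> nat" where
  "par \<omega> j = min (\<omega> (j - 1)) (j - 1)"

definition edges :: "(nat \<Rightarrow> nat) \<Rightarrow> nat \<Rightarrow> (nat \<times> nat) set" where
  "edges \<omega> n = {(j, par \<omega> j) | j. 1 \<le> j \<and> j \<le> n}"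

definition deg :: "(nat \<Rightarrow> nat) \<Rightarrow> nat \<Rightarrow> nat \<Rightarrow> nat" where
  "deg \<omega> n i = card {e \<in> edges \<omega> n. fst e = i \<or> snd e = i}"

fun depth :: "(nat \<Rightarrow> nat) \<Rightarrow> nat \<Rightarrow> nat" where
  "depth \<omega> 0 = 0"
| "depth \<omega> (Suc j) = Suc (depth \<omega> (min (\<omega> j) j))"

lemma depth_par: "1 \<le> j \<Longrightarrow> depth \<omega> j = Suc (depth \<omega> (par \<omega> j))"
  by (cases j) (auto simp: par_def)

definition level :: "(nat \<Rightarrow> nat) \<Rightarrow> nat \<Rightarrow> nat \<Rightarrow> nat set" where
  "level \<omega> n k = {i. i \<le> n \<and> depth \<omega> i = k}"

text \<open>Proportion of level-k vertices with degree > t log n (0 if level empty).\<close>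
definition Z :: "(nat \<Rightarrow> nat) \<Rightarrow> nat \<Rightarrow> nat \<Rightarrow> real \<Rightarrow> real" where
  "Z \<omega> n k t = real (card {i. i \<le> n \<and> i \<in> level \<omega> n k \<and> real (deg \<omega> n i) > t * ln (real n)})
                / real (card (level \<omega> n k))"

end

theory Submission
  imports Defs "HOL-Analysis.Analysis" "HOL-Real_Asymp.Real_Asymp"
begin


lemma depth_local:
  "(\<forall>l<i. \<omega> l = \<omega>' l) \<Longrightarrow> depth \<omega> i = depth \<omega>' i"
proof (induction i arbitrary: rule: less_induct)
  case (less i)
  show ?case
  proof (cases i)
    case 0 then show ?thesis by simp
  next
    case (Suc j)
    have "min (\<omega> j) j < i" using Suc by simp
    moreover have "\<forall>l<min (\<omega> j) j. \<omega> l = \<omega>' l" using less.prems Suc by auto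
    ultimately have "depth \<omega> (min (\<omega> j) j) = depth \<omega>' (min (\<omega> j) j)" using less.IH by blast
    moreover have "\<omega> j = \<omega>' j" using less.prems Suc by auto
    ultimately show ?thesis using Suc by simp
  qed
qed

definition NN :: "(nat \<Rightarrow> nat) \<Rightarrow> nat \<Rightarrow> nat \<Rightarrow> nat" where
  "NN \<omega> k n = card {i. i \<le> n \<and> depth \<omega> i = k}"

lemma NN_level: "card (level \<omega> n k) = NN \<omega> k n"
  by (simp add: level_def NN_def)

lemma NN_local: "(\<forall>l<n. \<omega> l = \<omega>' l) \<Longrightarrow> NN \<omega> k n = NN \<omega>' k n"
  unfolding NN_def
  by (rule arg_cong[where f=card], auto intro: depth_local[THEN sym] depth_local)

lemma depth_eq_0_iff: "depth \<omega> i = 0 \<longleftrightarrow> i = 0"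
  by (cases i) auto

lemma NN_0: "NN \<omega> 0 n = 1"
proof -
  have "{i. i \<le> n \<and> depth \<omega> i = 0} = {0}" by (auto simp: depth_eq_0_iff)
  then show ?thesis by (simp add: NN_def)
qed

lemma NN_zero: "NN \<omega> k 0 = (if k = 0 then 1 else 0)"
proof -
  have "{i. i \<le> 0 \<and> depth \<omega> i = k} = (if k = 0 then {0} else {})" by auto
  then show ?thesis by (simp add: NN_def)
qed

lemma NN_Suc: "NN \<omega> k (Suc n) = NN \<omega> k n + (if depth \<omega> (Suc n) = k then 1 else 0)"
proof -
  have "{i. i \<le> Suc n \<and> depth \<omega> i = k} = {i. i \<le> n \<and> depth \<omega> i = k} \<union> (if depth \<omega> (Suc n) = k then {Suc n} else {})"
    by (auto simp: le_Suc_eq)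
  then show ?thesis unfolding NN_def by (auto simp: card_insert_if)
qed

lemma NN_mono: "m \<le> n \<Longrightarrow> NN \<omega> k m \<le> NN \<omega> k n"
  unfolding NN_def by (rule card_mono) auto

definition Cc :: "(nat \<Rightarrow> nat) \<Rightarrow> nat \<Rightarrow> nat \<Rightarrow> nat" where
  "Cc \<omega> i n = card {l. i \<le> l \<and> l < n \<and> \<omega> l = i}"

lemma Cc_Suc: "i \<le> n \<Longrightarrow> Cc \<omega> i (Suc n) = Cc \<omega> i n + (if \<omega> n = i then 1 else 0)"
proof -
  assume "i \<le> n"
  then have "{l. i \<le> l \<and> l < Suc n \<and> \<omega> l = i} = {l. i \<le> l \<and> l < n \<and> \<omega> l = i} \<union> (if \<omega> n = i then {n} else {})"
    by (auto simp: less_Suc_eq)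
  then show ?thesis unfolding Cc_def by (auto simp: card_insert_if)
qed

lemma Cc_self: "Cc \<omega> i i = 0" by (simp add: Cc_def)

lemma Cc_local: "(\<forall>l<n. \<omega> l = \<omega>' l) \<Longrightarrow> Cc \<omega> i n = Cc \<omega>' i n"
  unfolding Cc_def by (rule arg_cong[where f=card]) auto

lemma Cc_mono: "m \<le> n \<Longrightarrow> Cc \<omega> i m \<le> Cc \<omega> i n"
  unfolding Cc_def by (rule card_mono) auto

definition supp :: "(nat \<Rightarrow> nat) \<Rightarrow> bool" where
  "supp \<omega> \<longleftrightarrow> (\<forall>m. \<omega> m \<le> m)"

lemma deg_ge: "supp \<omega> \<Longrightarrow> Cc \<omega> i n \<le> deg \<omega> n i"
proof -
  assume s: "supp \<omega>"
  have fin: "finite (edges \<omega> n)"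
  proof -
    have "edges \<omega> n = (\<lambda>j. (j, par \<omega> j)) ` {1..n}" by (auto simp: edges_def)
    then show ?thesis by simp
  qed
  have "(\<lambda>l. (Suc l, \<omega> l)) ` {l. i \<le> l \<and> l < n \<and> \<omega> l = i} \<subseteq> {e \<in> edges \<omega> n. fst e = i \<or> snd e = i}"
  proof
    fix e assume "e \<in> (\<lambda>l. (Suc l, \<omega> l)) ` {l. i \<le> l \<and> l < n \<and> \<omega> l = i}"
    then obtain l where l: "i \<le> l" "l < n" "\<omega> l = i" "e = (Suc l, \<omega> l)" by auto
    have "par \<omega> (Suc l) = \<omega> l" using s by (simp add: par_def supp_def min_def)
    then have "e \<in> edges \<omega> n" using l unfolding edges_def by force
    then show "e \<in> {e \<in> edges \<omega> n. fst e = i \<or> snd e = i}" using l by auto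
  qed
  then have "card ((\<lambda>l. (Suc l, \<omega> l)) ` {l. i \<le> l \<and> l < n \<and> \<omega> l = i}) \<le> deg \<omega> n i"
    unfolding deg_def by (rule card_mono[rotated]) (use fin in auto)
  moreover have "inj_on (\<lambda>l. (Suc l, \<omega> l)) {l. i \<le> l \<and> l < n \<and> \<omega> l = i}" by (auto simp: inj_on_def)
  ultimately show ?thesis unfolding Cc_def by (subst (asm) card_image) auto
qed

lemma deg_le: "supp \<omega> \<Longrightarrow> deg \<omega> n i \<le> Suc (Cc \<omega> i n)"
proof -
  assume s: "supp \<omega>"
  have "{e \<in> edges \<omega> n. fst e = i \<or> snd e = i} \<subseteq> insert (i, par \<omega> i) ((\<lambda>l. (Suc l, \<omega> l)) ` {l. i \<le> l \<and> l < n \<and> \<omega> l = i})"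
  proof
    fix e assume e: "e \<in> {e \<in> edges \<omega> n. fst e = i \<or> snd e = i}"
    then obtain j where j: "1 \<le> j" "j \<le> n" "e = (j, par \<omega> j)" by (auto simp: edges_def)
    have pj: "par \<omega> j = \<omega> (j - 1)" using s j by (simp add: par_def supp_def min_def)
    show "e \<in> insert (i, par \<omega> i) ((\<lambda>l. (Suc l, \<omega> l)) ` {l. i \<le> l \<and> l < n \<and> \<omega> l = i})"
    proof (cases "j = i")
      case True then show ?thesis using j by simp
    next
      case False
      then have "\<omega> (j - 1) = i" using e j pj by auto
      moreover have "\<omega> (j - 1) \<le> j - 1" using s by (simp add: supp_def)
      ultimately show ?thesis using j pj
        by (auto intro!: image_eqI[where x="j - 1"])
    qed
  qed
  then have "deg \<omega> n i \<le> card (insert (i, par \<omega> i) ((\<lambda>l. (Suc l, \<omega> l)) ` {l. i \<le> l \<and> l < n \<and> \<omega> l = i}))"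
    unfolding deg_def by (rule card_mono[rotated]) auto
  also have "\<dots> \<le> Suc (card ((\<lambda>l. (Suc l, \<omega> l)) ` {l. i \<le> l \<and> l < n \<and> \<omega> l = i}))"
    by (rule card_insert_le_m1) auto
  also have "\<dots> \<le> Suc (Cc \<omega> i n)" unfolding Cc_def by (simp add: card_image_le)
  finally show ?thesis .
qed


definition SS :: "nat \<Rightarrow> nat list set" where
  "SS m = {xs. length xs = m \<and> (\<forall>l<m. xs ! l \<le> l)}"

definition fn :: "nat list \<Rightarrow> nat \<Rightarrow> nat" where
  "fn xs = (\<lambda>l. xs ! l)"

definition EE :: "nat \<Rightarrow> ((nat \<Rightarrow> nat) \<Rightarrow> real) \<Rightarrow> real" where
  "EE m F = (\<Sum>xs\<in>SS m. F (fn xs)) / fact m"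

definition loc :: "nat \<Rightarrow> ((nat \<Rightarrow> nat) \<Rightarrow> 'a) \<Rightarrow> bool" where
  "loc m F \<longleftrightarrow> (\<forall>w w'. (\<forall>l<m. w l = w' l) \<longrightarrow> F w = F w')"

lemma SS_0: "SS 0 = {[]}" by (auto simp: SS_def)

lemma SS_Suc: "SS (Suc m) = (\<lambda>(xs,v). xs @ [v]) ` (SS m \<times> {0..m})"
proof (intro set_eqI iffI)
  fix ys assume ys: "ys \<in> SS (Suc m)"
  then have "ys \<noteq> []" by (auto simp: SS_def)
  then obtain xs v where yv: "ys = xs @ [v]" by (metis rev_exhaust)
  have len: "length xs = m" using ys yv by (simp add: SS_def)
  have all: "\<forall>l<Suc m. (xs@[v])!l \<le> l" using ys yv by (simp add: SS_def)
  have "xs \<in> SS m" unfolding SS_def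
  proof (intro CollectI conjI allI impI)
    fix l assume "l < m"
    then show "xs ! l \<le> l" using all[rule_format, of l] len by (simp add: nth_append)
  qed (rule len)
  moreover have "v \<le> m" using all[rule_format, of m] len by (metis lessI nth_append_length)
  ultimately have "xs \<in> SS m" "v \<in> {0..m}" by auto
  then show "ys \<in> (\<lambda>(xs,v). xs @ [v]) ` (SS m \<times> {0..m})" using yv by auto
next
  fix ys assume "ys \<in> (\<lambda>(xs,v). xs @ [v]) ` (SS m \<times> {0..m})"
  then obtain xs v where "xs \<in> SS m" "v \<le> m" "ys = xs @ [v]" by auto
  then show "ys \<in> SS (Suc m)" unfolding SS_def by (auto simp: nth_append less_Suc_eq)
qed

lemma inj_snoc: "inj_on (\<lambda>(xs,v). xs @ [v]) A"
  by (auto simp: inj_on_def)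

lemma finite_SS: "finite (SS m)"
  by (induction m) (auto simp: SS_0 SS_Suc)

lemma card_SS: "card (SS m) = fact m"
proof (induction m)
  case 0 then show ?case by (simp add: SS_0)
next
  case (Suc m)
  have "card (SS (Suc m)) = card (SS m \<times> {0..m})"
    unfolding SS_Suc by (rule card_image) (rule inj_snoc)
  also have "\<dots> = fact m * (Suc m)" using Suc by (simp add: card_cartesian_product)
  finally show ?case by (simp add: algebra_simps)
qed

lemma fn_snoc: "l < Suc m \<Longrightarrow> length xs = m \<Longrightarrow> fn (xs @ [v]) l = ((fn xs)(m := v)) l"
  by (auto simp: fn_def nth_append less_Suc_eq)

lemma locD: "loc m F \<Longrightarrow> (\<And>l. l < m \<Longrightarrow> w l = w' l) \<Longrightarrow> F w = F w'"
  unfolding loc_def by blast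

lemma loc_mono: "loc m F \<Longrightarrow> m \<le> m' \<Longrightarrow> loc m' F"
  unfolding loc_def by auto

lemma EE_Suc:
  assumes "loc (Suc m) F"
  shows "EE (Suc m) F = EE m (\<lambda>w. (\<Sum>v\<le>m. F (w(m := v))) / real (Suc m))"
proof -
  have "(\<Sum>ys\<in>SS (Suc m). F (fn ys)) = (\<Sum>p\<in>SS m \<times> {0..m}. F (fn ((\<lambda>(xs,v). xs @ [v]) p)))"
    unfolding SS_Suc by (rule sum.reindex[OF inj_snoc, unfolded comp_def])
  also have "\<dots> = (\<Sum>xs\<in>SS m. \<Sum>v\<in>{0..m}. F (fn (xs @ [v])))"
    by (subst sum.cartesian_product) (simp add: case_prod_beta)
  also have "\<dots> = (\<Sum>xs\<in>SS m. \<Sum>v\<le>m. F ((fn xs)(m := v)))"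
  proof (intro sum.cong refl)
    fix xs v assume "xs \<in> SS m" "v \<in> {..m}"
    then have "length xs = m" by (simp add: SS_def)
    then show "F (fn (xs @ [v])) = F ((fn xs)(m := v))"
      using fn_snoc by (intro locD[OF assms]) auto
  qed (auto)
  finally have eq: "(\<Sum>ys\<in>SS (Suc m). F (fn ys)) = (\<Sum>xs\<in>SS m. \<Sum>v\<le>m. F ((fn xs)(m := v)))" .
  have "EE m (\<lambda>w. (\<Sum>v\<le>m. F (w(m := v))) / real (Suc m))
      = (\<Sum>xs\<in>SS m. \<Sum>v\<le>m. F ((fn xs)(m := v))) / real (Suc m) / fact m"
    unfolding EE_def by (simp only: sum_divide_distrib)
  also have "\<dots> = (\<Sum>ys\<in>SS (Suc m). F (fn ys)) / fact (Suc m)"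
    unfolding eq by (simp add: divide_divide_eq_left mult.commute)
  finally show ?thesis unfolding EE_def by simp
qed

lemma EE_cong: "(\<And>w. F w = G w) \<Longrightarrow> EE m F = EE m G" by (simp add: EE_def)

lemma EE_const: "EE m (\<lambda>_. c) = c"
  by (simp add: EE_def card_SS)

lemma EE_add: "EE m (\<lambda>w. F w + G w) = EE m F + EE m G"
  by (simp add: EE_def sum.distrib add_divide_distrib)

lemma EE_diff: "EE m (\<lambda>w. F w - G w) = EE m F - EE m G"
  by (simp add: EE_def sum_subtractf diff_divide_distrib)

lemma EE_cmult: "EE m (\<lambda>w. c * F w) = c * EE m F"
  by (simp add: EE_def sum_distrib_left)

lemma EE_multc: "EE m (\<lambda>w. F w * c) = EE m F * c"
  by (simp add: EE_def sum_distrib_right)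

lemma EE_divc: "EE m (\<lambda>w. F w / c) = EE m F / c"
  by (simp add: EE_def sum_divide_distrib[symmetric])

lemma EE_sum: "finite I \<Longrightarrow> EE m (\<lambda>w. \<Sum>i\<in>I. F i w) = (\<Sum>i\<in>I. EE m (F i))"
  by (simp add: EE_def sum_divide_distrib[symmetric]) (rule sum.swap)

lemma EE_mono: "(\<And>w. F w \<le> G w) \<Longrightarrow> EE m F \<le> EE m G"
  unfolding EE_def by (intro divide_right_mono sum_mono) auto

lemma EE_nonneg: "(\<And>w. 0 \<le> F w) \<Longrightarrow> 0 \<le> EE m F"
  using EE_mono[of "\<lambda>_. 0" F m] by (simp add: EE_const)

lemma EE_reduce:
  assumes "loc m F" "m \<le> m'"
  shows "EE m' F = EE m F"
  using assms(2)
proof (induction m' rule: dec_induct)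
  case base then show ?case by simp
next
  case (step n)
  have l: "loc (Suc n) F" using loc_mono[OF assms(1)] step by auto
  have "EE (Suc n) F = EE n (\<lambda>w. (\<Sum>v\<le>n. F (w(n := v))) / real (Suc n))" by (rule EE_Suc[OF l])
  also have "\<dots> = EE n F"
  proof (rule EE_cong)
    fix w
    have "F (w(n := v)) = F w" for v using step by (intro locD[OF assms(1)]) auto
    then show "(\<Sum>v\<le>n. F (w(n := v))) / real (Suc n) = F w" by simp
  qed
  finally show ?case using step by simp
qed

lemma EE_ind_le1: "EE m (\<lambda>w. if P w then 1 else 0) \<le> 1"
  using EE_mono[of "\<lambda>w. if P w then 1 else 0" "\<lambda>_. 1" m] by (simp add: EE_const)

lemma EE_markov:
  assumes "\<And>w. 0 \<le> X w" "c > 0"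
  shows "EE m (\<lambda>w. if c \<le> X w then 1 else 0) \<le> EE m X / c"
proof -
  have "EE m (\<lambda>w. if c \<le> X w then 1 else 0) \<le> EE m (\<lambda>w. X w / c)"
    using assms by (intro EE_mono) auto
  then show ?thesis by (simp add: EE_divc)
qed


definition Mc :: "nat \<Rightarrow> nat measure" where
  "Mc m = measure_pmf (pmf_of_set {0..m})"

lemma RRT_eq: "RRT = PiM UNIV Mc"
  unfolding RRT_def Mc_def by simp

lemma prob_space_Mc: "prob_space (Mc m)"
  unfolding Mc_def by (rule measure_pmf.prob_space_axioms)

lemma sets_Mc[simp]: "sets (Mc m) = UNIV" by (simp add: Mc_def)
lemma space_Mc[simp]: "space (Mc m) = UNIV" by (simp add: Mc_def)

interpretation R: prob_space RRT
  unfolding RRT_eq by (rule prob_space_PiM) (rule prob_space_Mc)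

lemma space_RRT[simp]: "space RRT = UNIV"
  unfolding RRT_eq by (simp add: space_PiM)

definition lst :: "nat \<Rightarrow> (nat \<Rightarrow> nat) \<Rightarrow> nat list" where
  "lst m w = map w [0..<m]"

lemma fn_lst: "l < m \<Longrightarrow> fn (lst m w) l = w l"
  by (simp add: fn_def lst_def)

lemma cyl_eq: "{w. \<forall>l<m. w l = xs ! l} = prod_emb UNIV Mc {..<m} (PiE {..<m} (\<lambda>l. {xs ! l}))"
  by (auto simp: prod_emb_iff PiE_iff)

lemma lst_pre: "lst m -` {xs} \<inter> space RRT = (if length xs = m then {w. \<forall>l<m. w l = xs ! l} else {})"
proof -
  have "lst m w = xs \<longleftrightarrow> length xs = m \<and> (\<forall>l<m. w l = xs ! l)" for w
    unfolding lst_def list_eq_iff_nth_eq by auto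
  then show ?thesis by auto
qed

lemma cyl_sets: "{w. \<forall>l<m. w l = xs ! l} \<in> sets RRT"
  unfolding cyl_eq RRT_eq by (rule sets_PiM_I) auto

lemma lst_meas: "lst m \<in> measurable RRT (count_space UNIV)"
  unfolding measurable_count_space_eq2_countable
proof (intro conjI ballI)
  fix xs :: "nat list"
  show "lst m -` {xs} \<inter> space RRT \<in> sets RRT"
    unfolding lst_pre using cyl_sets by simp
qed auto

lemma fact_prod_real: "(\<Prod>l<m. real (Suc l)) = fact m"
  by (induction m) (auto simp: algebra_simps)

lemma emeasure_cyl:
  "emeasure RRT {w. \<forall>l<m. w l = xs ! l} = (\<Prod>l<m. emeasure (Mc l) {xs ! l})"
  unfolding cyl_eq RRT_eq by (rule emeasure_PiM_emb) (auto intro: prob_space_Mc)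

lemma distr_lst: "distr RRT (count_space UNIV) (lst m) = measure_pmf (pmf_of_set (SS m))"
proof (rule measure_eqI_countable[where A=UNIV])
  show "sets (distr RRT (count_space UNIV) (lst m)) = Pow UNIV" by simp
  show "sets (measure_pmf (pmf_of_set (SS m))) = Pow UNIV" by simp
  show "countable (UNIV :: nat list set)" by simp
  fix xs :: "nat list"
  have ne: "SS m \<noteq> {}" using card_SS[of m] by auto
  have "emeasure (distr RRT (count_space UNIV) (lst m)) {xs} = emeasure RRT (lst m -` {xs} \<inter> space RRT)"
    by (rule emeasure_distr[OF lst_meas]) simp
  also have "\<dots> = emeasure (measure_pmf (pmf_of_set (SS m))) {xs}"
  proof (cases "xs \<in> SS m")
    case True
    then have len: "length xs = m" by (simp add: SS_def)
    have "emeasure RRT (lst m -` {xs} \<inter> space RRT) = (\<Prod>l<m. emeasure (Mc l) {xs ! l})"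
      using len by (simp only: lst_pre emeasure_cyl if_True refl)
    also have "\<dots> = (\<Prod>l<m. ennreal (1 / real (Suc l)))"
    proof (rule prod.cong[OF refl])
      fix l assume "l \<in> {..<m}"
      then have "xs ! l \<le> l" using True by (simp add: SS_def)
      then show "emeasure (Mc l) {xs ! l} = ennreal (1 / real (Suc l))"
        unfolding Mc_def by (subst emeasure_pmf_of_set) auto
    qed
    also have "\<dots> = ennreal (\<Prod>l<m. 1 / real (Suc l))" by (rule prod_ennreal) auto
    also have "(\<Prod>l<m. 1 / real (Suc l)) = 1 / fact m"
      using fact_prod_real[of m] by (simp add: prod_dividef)
    also have "ennreal (1 / fact m) = emeasure (measure_pmf (pmf_of_set (SS m))) {xs}"
      using True ne finite_SS[of m] by (subst emeasure_pmf_of_set) (auto simp: card_SS)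
    finally show ?thesis .
  next
    case False
    have "emeasure RRT (lst m -` {xs} \<inter> space RRT) = 0"
    proof (cases "length xs = m")
      case True
      with False obtain l where l: "l < m" "\<not> xs ! l \<le> l" by (auto simp: SS_def)
      have "emeasure RRT (lst m -` {xs} \<inter> space RRT) = (\<Prod>l<m. emeasure (Mc l) {xs ! l})"
        using True by (simp only: lst_pre emeasure_cyl if_True refl)
      also have "emeasure (Mc l) {xs ! l} = 0"
        unfolding Mc_def using l by (subst emeasure_pmf_of_set) auto
      then have "(\<Prod>l<m. emeasure (Mc l) {xs ! l}) = 0"
        using l by (intro prod_zero) auto
      finally show ?thesis .
    next
      case False then show ?thesis using lst_pre[of m xs] by simp
    qed
    also have "0 = emeasure (measure_pmf (pmf_of_set (SS m))) {xs}"
      using False ne finite_SS[of m] by (subst emeasure_pmf_of_set) auto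
    finally show ?thesis .
  qed
  finally show "emeasure (distr RRT (count_space UNIV) (lst m)) {xs} = emeasure (measure_pmf (pmf_of_set (SS m))) {xs}" .
qed

lemma loc_pred_eq:
  assumes "loc m P"
  shows "{w \<in> space RRT. P w} = lst m -` {xs. P (fn xs)} \<inter> space RRT"
proof -
  have "P w = P (fn (lst m w))" for w by (rule locD[OF assms]) (simp add: fn_lst)
  then show ?thesis by auto
qed

lemma loc_pred_sets: "loc m P \<Longrightarrow> {w \<in> space RRT. P w} \<in> sets RRT"
  using loc_pred_eq[of m P] lst_meas by (metis measurable_sets sets_count_space UNIV_I Pow_UNIV)

lemma prob_loc:
  assumes "loc m P"
  shows "R.prob {w \<in> space RRT. P w} = EE m (\<lambda>w. if P w then 1 else 0)"
proof -
  have "R.prob {w \<in> space RRT. P w} = measure (distr RRT (count_space UNIV) (lst m)) {xs. P (fn xs)}"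
    unfolding loc_pred_eq[OF assms] by (subst measure_distr[OF lst_meas]) auto
  also have "\<dots> = card (SS m \<inter> {xs. P (fn xs)}) / card (SS m)"
    unfolding distr_lst using card_SS[of m] finite_SS[of m]
    by (subst measure_pmf_of_set) auto
  also have "\<dots> = EE m (\<lambda>w. if P w then 1 else 0)"
    unfolding EE_def card_SS using finite_SS[of m]
    by (simp add: sum.If_cases Int_def conj_commute)
  finally show ?thesis .
qed

lemma AE_supp: "AE w in RRT. supp w"
proof -
  have "AE w in RRT. w m \<le> m" for m
  proof -
    have l: "loc (Suc m) (\<lambda>w. \<not> w m \<le> m)" unfolding loc_def by auto
    have "R.prob {w \<in> space RRT. \<not> w m \<le> m} = 0"
    proof -
      have "EE (Suc m) (\<lambda>w. if \<not> w m \<le> m then 1 else 0) = 0"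
      proof -
        have "EE (Suc m) (\<lambda>w. if \<not> w m \<le> m then 1 else 0) = (\<Sum>xs\<in>SS (Suc m). 0) / fact (Suc m)"
          unfolding EE_def by (intro arg_cong2[where f="(/)"] sum.cong) (auto simp: SS_def fn_def)
        then show ?thesis by simp
      qed
      then show ?thesis using prob_loc[OF l] by simp
    qed
    then show ?thesis using loc_pred_sets[OF l]
      by (intro AE_I[where N="{w \<in> space RRT. \<not> w m \<le> m}"]) (auto simp: R.emeasure_eq_measure)
  qed
  then show ?thesis unfolding supp_def by (simp add: AE_all_countable)
qed


definition ind :: "bool \<Rightarrow> real" where "ind P = (if P then 1 else 0)"

lemma ind_simps[simp]: "ind True = 1" "ind False = 0" by (auto simp: ind_def)
lemma ind_nonneg: "0 \<le> ind P" by (simp add: ind_def)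
lemma ind_le1: "ind P \<le> 1" by (simp add: ind_def)
lemma ind_sq: "ind P * ind P = ind P" by (simp add: ind_def)

lemma NN_sum: "real (NN w j m) = (\<Sum>v\<le>m. ind (depth w v = j))"
proof -
  have "real (NN w j m) = real (card ({..m} \<inter> {v. depth w v = j}))" unfolding NN_def
    by (rule arg_cong[where f="\<lambda>A. real (card A)"]) auto
  also have "\<dots> = (\<Sum>v\<le>m. ind (depth w v = j))"
    by (simp add: ind_def sum.If_cases)
  finally show ?thesis .
qed

lemma depth_upd: "v \<le> m \<Longrightarrow> depth (w(m := v)) v = depth w v"
  by (rule depth_local) auto

lemma depth_upd_Suc: "v \<le> m \<Longrightarrow> depth (w(m := v)) (Suc m) = Suc (depth w v)"
  by (simp add: depth_upd)

lemma NN_upd: "NN (w(m := v)) k m = NN w k m"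
  by (rule NN_local) auto

lemma loc_NN: "loc m (\<lambda>w. f (NN w k m))"
  unfolding loc_def using NN_local by metis

lemma loc_depth: "i \<le> m \<Longrightarrow> loc m (\<lambda>w. depth w i)"
  unfolding loc_def by (auto intro: depth_local)

lemma NN_upd_Suc:
  assumes "1 \<le> k" "v \<le> m"
  shows "real (NN (w(m := v)) k (Suc m)) = real (NN w k m) + ind (depth w v = k - 1)"
proof -
  have "depth (w(m := v)) (Suc m) = Suc (depth w v)" using assms by (rule_tac depth_upd_Suc) simp
  then show ?thesis using assms unfolding NN_Suc NN_upd by (auto simp: ind_def)
qed

definition ee :: "nat \<Rightarrow> nat \<Rightarrow> real" where
  "ee k m = EE m (\<lambda>w. real (NN w k m))"

lemma ee_0: "ee 0 m = 1" by (simp add: ee_def NN_0 EE_const)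

lemma ee_zero: "1 \<le> k \<Longrightarrow> ee k 0 = 0" by (simp add: ee_def NN_zero EE_const)

lemma ee_Suc:
  assumes "1 \<le> k"
  shows "ee k (Suc m) = ee k m + ee (k - 1) m / real (Suc m)"
proof -
  have "ee k (Suc m) = EE m (\<lambda>w. (\<Sum>v\<le>m. real (NN (w(m := v)) k (Suc m))) / real (Suc m))"
    unfolding ee_def by (rule EE_Suc) (rule loc_NN)
  also have "\<dots> = EE m (\<lambda>w. real (NN w k m) + real (NN w (k - 1) m) / real (Suc m))"
  proof (rule EE_cong)
    fix w
    have "(\<Sum>v\<le>m. real (NN (w(m := v)) k (Suc m))) = (\<Sum>v\<le>m. real (NN w k m) + ind (depth w v = k - 1))"
      using assms by (intro sum.cong) (auto simp: NN_upd_Suc)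
    also have "\<dots> = real (Suc m) * real (NN w k m) + real (NN w (k - 1) m)"
      by (simp add: sum.distrib NN_sum)
    finally show "(\<Sum>v\<le>m. real (NN (w(m := v)) k (Suc m))) / real (Suc m) = real (NN w k m) + real (NN w (k - 1) m) / real (Suc m)"
      by (simp add: field_simps)
  qed
  also have "\<dots> = ee k m + ee (k - 1) m / real (Suc m)"
    unfolding ee_def by (simp add: EE_add EE_divc)
  finally show ?thesis .
qed

lemma pow_incr: "0 \<le> (a::real) \<Longrightarrow> 0 \<le> h \<Longrightarrow> 1 \<le> k \<Longrightarrow> a ^ k + a ^ (k - 1) * h \<le> (a + h) ^ (k::nat)"
proof -
  assume a: "0 \<le> a" "0 \<le> h" "1 \<le> k"
  have "a ^ (k - 1) \<le> (a + h) ^ (k - 1)" using a by (intro power_mono) simp_all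
  then have "a ^ (k - 1) * (a + h) \<le> (a + h) ^ (k - 1) * (a + h)" using a by (simp add: mult_right_mono)
  moreover have "a ^ (k - 1) * (a + h) = a ^ k + a ^ (k - 1) * h"
    using a by (cases k) (auto simp: algebra_simps)
  moreover have "(a + h) ^ (k - 1) * (a + h) = (a + h) ^ k" using a by (cases k) auto
  ultimately show ?thesis by simp
qed

lemma ee_le: "ee k m \<le> harm m ^ k"
proof (induction k arbitrary: m)
  case 0 then show ?case by (simp add: ee_0)
next
  case (Suc k)
  note IHk = Suc.IH
  show ?case
  proof (induction m)
    case 0 then show ?case by (simp add: ee_zero harm_def)
  next
    case (Suc m)
    have "ee (Suc k) (Suc m) = ee (Suc k) m + ee k m / real (Suc m)" using ee_Suc[of "Suc k" m] by simp
    also have "\<dots> \<le> harm m ^ Suc k + harm m ^ k * inverse (real (Suc m))"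
      using Suc.IH IHk[of m]
      by (intro add_mono) (auto simp: divide_inverse intro!: mult_right_mono)
    also have "\<dots> \<le> (harm m + inverse (real (Suc m))) ^ Suc k"
      using pow_incr[of "harm m" "inverse (real (Suc m))" "Suc k"] by (simp add: harm_nonneg)
    also have "\<dots> = harm (Suc m) ^ Suc k" by (simp add: harm_Suc)
    finally show ?case .
  qed
qed

lemma ee_nonneg: "0 \<le> ee k m" unfolding ee_def by (rule EE_nonneg) simp


definition Mg :: "nat \<Rightarrow> (nat \<Rightarrow> nat) \<Rightarrow> nat \<Rightarrow> real" where
  "Mg k w m = (\<Sum>j<m. ind (depth w (Suc j) = k) - real (NN w (k - 1) j) / real (Suc j))"

lemma NN_as_sum: "1 \<le> k \<Longrightarrow> real (NN w k m) = (\<Sum>j<m. ind (depth w (Suc j) = k))"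
  by (induction m) (auto simp: NN_zero NN_Suc ind_def)

lemma loc_Mg: "loc m (\<lambda>w. f (Mg k w m))"
proof -
  have "Mg k w m = Mg k w' m" if "\<forall>l<m. w l = w' l" for w w'
    unfolding Mg_def
  proof (intro sum.cong refl)
    fix j assume "j \<in> {..<m}"
    then have "depth w (Suc j) = depth w' (Suc j)" "NN w (k - 1) j = NN w' (k - 1) j"
      using that by (auto intro!: depth_local NN_local)
    then show "ind (depth w (Suc j) = k) - real (NN w (k - 1) j) / real (Suc j) =
               ind (depth w' (Suc j) = k) - real (NN w' (k - 1) j) / real (Suc j)" by simp
  qed
  then show ?thesis unfolding loc_def by metis
qed

lemma Mg_upd: "Mg k (w(m := v)) m = Mg k w m"
  using loc_Mg[of m "\<lambda>x. x" k] unfolding loc_def by (metis fun_upd_other nat_neq_iff)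

lemma Mg_upd_Suc:
  assumes "1 \<le> k" "v \<le> m"
  shows "Mg k (w(m := v)) (Suc m) = Mg k w m + ind (depth w v = k - 1) - real (NN w (k - 1) m) / real (Suc m)"
proof -
  have "depth (w(m := v)) (Suc m) = Suc (depth w v)" using assms by (rule_tac depth_upd_Suc) simp
  then have "ind (depth (w(m := v)) (Suc m) = k) = ind (depth w v = k - 1)" using assms by (auto simp: ind_def)
  moreover have "Mg k (w(m := v)) (Suc m) = Mg k (w(m := v)) m + (ind (depth (w(m := v)) (Suc m) = k) - real (NN (w(m := v)) (k - 1) m) / real (Suc m))"
    unfolding Mg_def by (simp only: sum.lessThan_Suc)
  ultimately show ?thesis by (simp add: Mg_upd NN_upd)
qed

lemma avg_sq:
  fixes A p :: real and b :: "nat \<Rightarrow> real"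
  assumes b: "\<And>v. b v = 0 \<or> b v = 1" and p: "p = (\<Sum>v\<le>m. b v) / real (Suc m)"
  shows "(\<Sum>v\<le>m. (A + b v - p)^2) / real (Suc m) \<le> A^2 + p"
proof -
  have s: "(\<Sum>v\<le>m. b v) = real (Suc m) * p" using p by simp
  have "(\<Sum>v\<le>m. (A + b v - p)^2) = (\<Sum>v\<le>m. A^2 + 2 * A * (b v - p) + (b v - p) * b v - p * (b v - p))"
    by (intro sum.cong refl) (simp add: power2_eq_square algebra_simps)
  also have "\<dots> = (\<Sum>v\<le>m. A^2) + (\<Sum>v\<le>m. 2 * A * (b v - p)) + (\<Sum>v\<le>m. (b v - p) * b v) - (\<Sum>v\<le>m. p * (b v - p))"
    by (simp only: sum.distrib sum_subtractf)
  also have "(\<Sum>v\<le>m. 2 * A * (b v - p)) = 2 * A * ((\<Sum>v\<le>m. b v) - real (Suc m) * p)"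
    by (simp add: sum_distrib_left[symmetric] sum_subtractf)
  also have "(\<Sum>v\<le>m. p * (b v - p)) = p * ((\<Sum>v\<le>m. b v) - real (Suc m) * p)"
    by (simp add: sum_distrib_left[symmetric] sum_subtractf)
  also have "(\<Sum>v\<le>m. A^2) + 2 * A * ((\<Sum>v\<le>m. b v) - real (Suc m) * p) + (\<Sum>v\<le>m. (b v - p) * b v) - p * ((\<Sum>v\<le>m. b v) - real (Suc m) * p) = real (Suc m) * A^2 + (\<Sum>v\<le>m. (b v - p) * b v)" using s by simp
  also have "(\<Sum>v\<le>m. (b v - p) * b v) \<le> (\<Sum>v\<le>m. b v)"
  proof (rule sum_mono)
    fix v
    have "0 \<le> p" using p b by (auto intro!: divide_nonneg_pos sum_nonneg) (metis order_refl zero_le_one)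
    then show "(b v - p) * b v \<le> b v" using b[of v] by auto
  qed
  finally have "(\<Sum>v\<le>m. (A + b v - p)^2) \<le> real (Suc m) * (A^2 + p)" using s by (simp add: algebra_simps)
  then show ?thesis by (simp add: divide_le_eq mult.commute)
qed

lemma EE_Mg_sq: "1 \<le> k \<Longrightarrow> EE m (\<lambda>w. (Mg k w m)^2) \<le> ee k m"
proof (induction m)
  case 0 then show ?case by (simp add: Mg_def EE_const ee_zero)
next
  case (Suc m)
  have "EE (Suc m) (\<lambda>w. (Mg k w (Suc m))^2) = EE m (\<lambda>w. (\<Sum>v\<le>m. (Mg k (w(m := v)) (Suc m))^2) / real (Suc m))"
    by (rule EE_Suc) (rule loc_Mg)
  also have "\<dots> \<le> EE m (\<lambda>w. (Mg k w m)^2 + real (NN w (k - 1) m) / real (Suc m))"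
  proof (rule EE_mono)
    fix w
    have "(\<Sum>v\<le>m. (Mg k (w(m := v)) (Suc m))^2) = (\<Sum>v\<le>m. (Mg k w m + ind (depth w v = k - 1) - real (NN w (k - 1) m) / real (Suc m))^2)"
      using Suc.prems by (intro sum.cong refl) (simp add: Mg_upd_Suc)
    moreover have "(\<Sum>v\<le>m. (Mg k w m + ind (depth w v = k - 1) - real (NN w (k - 1) m) / real (Suc m))^2) / real (Suc m)
        \<le> (Mg k w m)^2 + real (NN w (k - 1) m) / real (Suc m)"
      by (rule avg_sq) (auto simp: ind_def NN_sum)
    ultimately show "(\<Sum>v\<le>m. (Mg k (w(m := v)) (Suc m))^2) / real (Suc m) \<le> (Mg k w m)^2 + real (NN w (k - 1) m) / real (Suc m)"
      by simp
  qed
  also have "\<dots> = EE m (\<lambda>w. (Mg k w m)^2) + ee (k - 1) m / real (Suc m)"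
    by (simp add: EE_add EE_divc ee_def)
  also have "\<dots> \<le> ee k m + ee (k - 1) m / real (Suc m)" using Suc by simp
  also have "\<dots> = ee k (Suc m)" using ee_Suc[OF Suc.prems] by simp
  finally show ?case .
qed

lemma Cc_upd_Suc: "i \<le> m \<Longrightarrow> Cc (w(m := v)) i (Suc m) = Cc w i m + (if v = i then 1 else 0)"
proof -
  assume "i \<le> m"
  then have "Cc (w(m := v)) i (Suc m) = Cc (w(m := v)) i m + (if v = i then 1 else 0)" by (simp add: Cc_Suc)
  moreover have "Cc (w(m := v)) i m = Cc w i m" by (rule Cc_local) auto
  ultimately show ?thesis by simp
qed

lemma loc_Cc: "i \<le> m \<Longrightarrow> loc m (\<lambda>w. f (depth w i) (Cc w i m))"
proof -
  assume "i \<le> m"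
  then have "depth w i = depth w' i \<and> Cc w i m = Cc w' i m" if "\<forall>l<m. w l = w' l" for w w'
    using that by (auto intro!: depth_local Cc_local)
  then show ?thesis unfolding loc_def by metis
qed

lemma sum_exp_ind:
  assumes "i \<le> m"
  shows "(\<Sum>v\<le>m. exp (s * (if v = i then 1 else 0))) = real m + exp s"
proof -
  have "(\<Sum>v\<le>m. exp (s * (if v = i then 1 else 0))) = (\<Sum>v\<in>insert i ({..m} - {i}). exp (s * (if v = i then 1 else 0)))"
    using assms by (intro sum.cong) auto
  also have "\<dots> = exp s + (\<Sum>v\<in>{..m} - {i}. 1)" by (subst sum.insert) auto
  also have "\<dots> = exp s + real m" using assms by simp
  finally show ?thesis by simp
qed

lemma EE_exp:
  assumes "i \<le> m"
  shows "EE m (\<lambda>w. ind (depth w i = k) * exp (s * real (Cc w i m)))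
       = EE i (\<lambda>w. ind (depth w i = k)) * (\<Prod>l\<in>{i..<m}. 1 + (exp s - 1) / real (Suc l))"
  using assms
proof (induction m rule: dec_induct)
  case base then show ?case by (simp add: Cc_self)
next
  case (step m)
  have "EE (Suc m) (\<lambda>w. ind (depth w i = k) * exp (s * real (Cc w i (Suc m))))
      = EE m (\<lambda>w. (\<Sum>v\<le>m. ind (depth (w(m := v)) i = k) * exp (s * real (Cc (w(m := v)) i (Suc m)))) / real (Suc m))"
    by (rule EE_Suc) (rule loc_Cc, use step in simp)
  also have "\<dots> = EE m (\<lambda>w. ind (depth w i = k) * exp (s * real (Cc w i m)) * (1 + (exp s - 1) / real (Suc m)))"
  proof (rule EE_cong)
    fix w
    have d: "depth (w(m := v)) i = depth w i" for v using step by (intro depth_local) auto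
    have "(\<Sum>v\<le>m. ind (depth (w(m := v)) i = k) * exp (s * real (Cc (w(m := v)) i (Suc m))))
        = (\<Sum>v\<le>m. ind (depth w i = k) * exp (s * real (Cc w i m)) * exp (s * (if v = i then 1 else 0)))"
      using step by (intro sum.cong refl) (simp add: d Cc_upd_Suc distrib_left exp_add)
    also have "\<dots> = ind (depth w i = k) * exp (s * real (Cc w i m)) * (real m + exp s)"
      using step by (simp add: sum_distrib_left[symmetric] sum_exp_ind)
    finally show "(\<Sum>v\<le>m. ind (depth (w(m := v)) i = k) * exp (s * real (Cc (w(m := v)) i (Suc m)))) / real (Suc m)
        = ind (depth w i = k) * exp (s * real (Cc w i m)) * (1 + (exp s - 1) / real (Suc m))"
      by (simp add: field_simps)
  qed
  also have "\<dots> = EE i (\<lambda>w. ind (depth w i = k)) * (\<Prod>l\<in>{i..<Suc m}. 1 + (exp s - 1) / real (Suc l))"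
    using step by (simp add: EE_multc prod.atLeastLessThan_Suc)
  finally show ?case .
qed

lemma ee_sum_depth: "ee k a = (\<Sum>i\<le>a. EE i (\<lambda>w. ind (depth w i = k)))"
proof -
  have "ee k a = EE a (\<lambda>w. \<Sum>i\<le>a. ind (depth w i = k))" unfolding ee_def by (simp add: NN_sum)
  also have "\<dots> = (\<Sum>i\<le>a. EE a (\<lambda>w. ind (depth w i = k)))" by (simp add: EE_sum)
  also have "\<dots> = (\<Sum>i\<le>a. EE i (\<lambda>w. ind (depth w i = k)))"
  proof (intro sum.cong refl)
    fix i assume "i \<in> {..a}"
    then show "EE a (\<lambda>w. ind (depth w i = k)) = EE i (\<lambda>w. ind (depth w i = k))"
      by (intro EE_reduce) (auto simp: loc_def intro!: arg_cong[where f=ind] depth_local)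
  qed
  finally show ?thesis .
qed

lemma EE_depth_nonneg: "0 \<le> EE i (\<lambda>w. ind (depth w i = k))"
  by (rule EE_nonneg) (simp add: ind_nonneg)


lemma stolz:
  fixes a b :: "nat \<Rightarrow> real"
  assumes inc: "\<And>n. b n < b (Suc n)" and binf: "filterlim b at_top sequentially"
    and lim: "(\<lambda>n. (a (Suc n) - a n) / (b (Suc n) - b n)) \<longlonglongrightarrow> L"
  shows "(\<lambda>n. a n / b n) \<longlonglongrightarrow> L"
proof (rule LIMSEQ_I)
  fix r :: real assume r: "0 < r"
  define \<epsilon> where "\<epsilon> = r / 4"
  have e: "0 < \<epsilon>" using r by (simp add: \<epsilon>_def)
  obtain N1 where N1: "\<And>n. n \<ge> N1 \<Longrightarrow> norm ((a (Suc n) - a n) / (b (Suc n) - b n) - L) < \<epsilon>"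
    using LIMSEQ_D[OF lim e] by blast
  have stp: "\<bar>(a (Suc n) - a n) - L * (b (Suc n) - b n)\<bar> \<le> \<epsilon> * (b (Suc n) - b n)" if "n \<ge> N1" for n
  proof -
    have d: "b (Suc n) - b n > 0" using inc[of n] by simp
    have "\<bar>(a (Suc n) - a n) / (b (Suc n) - b n) - L\<bar> < \<epsilon>" using N1[OF that] by simp
    moreover have "(a (Suc n) - a n) / (b (Suc n) - b n) - L = ((a (Suc n) - a n) - L * (b (Suc n) - b n)) / (b (Suc n) - b n)"
      using d by (simp add: diff_divide_distrib)
    ultimately have "\<bar>(a (Suc n) - a n) - L * (b (Suc n) - b n)\<bar> / (b (Suc n) - b n) < \<epsilon>"
      using d by (metis abs_div_pos)
    then have "\<bar>(a (Suc n) - a n) - L * (b (Suc n) - b n)\<bar> < \<epsilon> * (b (Suc n) - b n)"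
      using d by (metis pos_divide_less_eq mult.commute)
    then show ?thesis by simp
  qed
  have tel: "\<bar>(a n - a N1) - L * (b n - b N1)\<bar> \<le> \<epsilon> * (b n - b N1)" if "n \<ge> N1" for n
    using that
  proof (induction n rule: dec_induct)
    case base then show ?case by simp
  next
    case (step n)
    have "\<bar>(a (Suc n) - a N1) - L * (b (Suc n) - b N1)\<bar> \<le> \<bar>(a n - a N1) - L * (b n - b N1)\<bar> + \<bar>(a (Suc n) - a n) - L * (b (Suc n) - b n)\<bar>"
    proof -
      have "(a (Suc n) - a N1) - L * (b (Suc n) - b N1) = ((a n - a N1) - L * (b n - b N1)) + ((a (Suc n) - a n) - L * (b (Suc n) - b n))"
        by (simp add: algebra_simps)
      then show ?thesis by (metis abs_triangle_ineq)
    qed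
    also have "\<dots> \<le> \<epsilon> * (b n - b N1) + \<epsilon> * (b (Suc n) - b n)"
      using step.IH stp[OF step.hyps(1)] by (intro add_mono) auto
    finally show ?case by (simp add: algebra_simps)
  qed
  define C where "C = \<bar>a N1 - L * b N1\<bar> / \<epsilon> + \<bar>b N1\<bar> + 1"
  have "eventually (\<lambda>n. b n > C) sequentially" using binf by (simp add: filterlim_at_top_dense)
  then obtain N2 where N2: "\<And>n. n \<ge> N2 \<Longrightarrow> b n > C" by (auto simp: eventually_sequentially)
  show "\<exists>no. \<forall>n\<ge>no. norm (a n / b n - L) < r"
  proof (intro exI allI impI)
    fix n assume n: "n \<ge> max N1 N2"
    have bn: "b n > C" using N2 n by auto
    have C1: "C \<ge> 1" "C \<ge> \<bar>b N1\<bar>" "C * \<epsilon> \<ge> \<bar>a N1 - L * b N1\<bar>"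
      using e by (auto simp: C_def field_simps)
    have bpos: "b n > 0" using bn C1 by linarith
    have "a n - L * b n = (a N1 - L * b N1) + ((a n - a N1) - L * (b n - b N1))" by (simp add: algebra_simps)
    then have "\<bar>a n - L * b n\<bar> \<le> \<bar>a N1 - L * b N1\<bar> + \<epsilon> * (b n - b N1)"
      using tel[of n] n abs_triangle_ineq[of "a N1 - L * b N1" "(a n - a N1) - L * (b n - b N1)"] by simp
    also have "\<dots> \<le> \<epsilon> * b n + \<epsilon> * (b n + b n)"
    proof (intro add_mono)
      have "C * \<epsilon> \<le> b n * \<epsilon>" by (rule mult_right_mono) (use bn e in auto)
      then show "\<bar>a N1 - L * b N1\<bar> \<le> \<epsilon> * b n" using C1(3) by (simp add: mult.commute)
      show "\<epsilon> * (b n - b N1) \<le> \<epsilon> * (b n + b n)" using C1(2) bn e by (intro mult_left_mono) auto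
    qed
    finally have "\<bar>a n - L * b n\<bar> \<le> 3 * \<epsilon> * b n" by simp
    then have "\<bar>a n - L * b n\<bar> / b n \<le> 3 * \<epsilon>" using bpos by (metis pos_divide_le_eq)
    moreover have "a n / b n - L = (a n - L * b n) / b n" using bpos by (simp add: diff_divide_distrib)
    ultimately have "\<bar>a n / b n - L\<bar> \<le> 3 * \<epsilon>" using bpos by (metis abs_div_pos)
    then show "norm (a n / b n - L) < r" using r by (simp add: \<epsilon>_def)
  qed
qed

lemma interp:
  fixes a b :: "nat \<Rightarrow> real" and m :: "nat \<Rightarrow> nat"
  assumes ma: "mono a" and mb: "mono b" and bpos: "\<And>n. n \<ge> m 0 \<Longrightarrow> 0 < b n"
    and apos: "\<And>n. 0 \<le> a n" and sm: "strict_mono m"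
    and lim: "(\<lambda>j. a (m j) / b (m j)) \<longlonglongrightarrow> L"
    and rat: "(\<lambda>j. b (m (Suc j)) / b (m j)) \<longlonglongrightarrow> 1"
  shows "(\<lambda>n. a n / b n) \<longlonglongrightarrow> L"
proof -
  define J where "J n = Max {j. m j \<le> n}" for n
  have fin: "finite {j. m j \<le> n}" for n
    by (rule finite_subset[of _ "{..n}"]) (auto intro: order.trans[OF strict_mono_imp_increasing[OF sm]])
  have J1: "m (J n) \<le> n" if "n \<ge> m 0" for n
  proof -
    have "J n \<in> {j. m j \<le> n}" unfolding J_def by (rule Max_in[OF fin]) (use that in auto)
    then show ?thesis by simp
  qed
  have J2: "n < m (Suc (J n))" for n
  proof (rule ccontr)
    assume "\<not> n < m (Suc (J n))"
    then have "Suc (J n) \<le> J n" unfolding J_def by (intro Max_ge[OF fin]) (auto simp: J_def)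
    then show False by simp
  qed
  have J3: "j \<le> J n" if "m j \<le> n" for j n
    unfolding J_def using that by (intro Max_ge[OF fin]) auto
  have Jlim: "filterlim J at_top sequentially"
    unfolding filterlim_at_top
  proof
    fix j0 show "eventually (\<lambda>n. j0 \<le> J n) sequentially"
      unfolding eventually_sequentially using J3 by (intro exI[of _ "m j0"]) auto
  qed
  have lim1: "(\<lambda>j. a (m (Suc j)) / b (m (Suc j)) * (b (m (Suc j)) / b (m j))) \<longlonglongrightarrow> L * 1"
    by (intro tendsto_mult rat) (rule LIMSEQ_Suc[OF lim])
  have lim2: "(\<lambda>j. (a (m j) / b (m j)) / (b (m (Suc j)) / b (m j))) \<longlonglongrightarrow> L / 1"
    by (intro tendsto_divide rat lim) simp
  have u: "(\<lambda>n. a (m (Suc (J n))) / b (m (Suc (J n))) * (b (m (Suc (J n))) / b (m (J n)))) \<longlonglongrightarrow> L"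
    using filterlim_compose[OF lim1 Jlim] by simp
  have l: "(\<lambda>n. (a (m (J n)) / b (m (J n))) / (b (m (Suc (J n))) / b (m (J n)))) \<longlonglongrightarrow> L"
    using filterlim_compose[OF lim2 Jlim] by simp
  show ?thesis
  proof (rule tendsto_sandwich[OF _ _ l u])
    have m0: "m 0 \<le> m j" for j using sm by (simp add: strict_mono_less_eq)
    show "eventually (\<lambda>n. (a (m (J n)) / b (m (J n))) / (b (m (Suc (J n))) / b (m (J n))) \<le> a n / b n) sequentially"
      unfolding eventually_sequentially
    proof (intro exI[of _ "m 0"] allI impI)
      fix n assume n: "m 0 \<le> n"
      have p1: "0 < b (m (J n))" "0 < b (m (Suc (J n)))" using bpos m0 by auto
      have "(a (m (J n)) / b (m (J n))) / (b (m (Suc (J n))) / b (m (J n))) = a (m (J n)) / b (m (Suc (J n)))"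
        using p1 by simp
      also have "\<dots> \<le> a n / b n"
        by (rule frac_le) (use apos ma mb J1[OF n] J2[of n] bpos[OF n] in \<open>auto simp: mono_def\<close>)
      finally show "(a (m (J n)) / b (m (J n))) / (b (m (Suc (J n))) / b (m (J n))) \<le> a n / b n" .
    qed
    show "eventually (\<lambda>n. a n / b n \<le> a (m (Suc (J n))) / b (m (Suc (J n))) * (b (m (Suc (J n))) / b (m (J n)))) sequentially"
      unfolding eventually_sequentially
    proof (intro exI[of _ "m 0"] allI impI)
      fix n assume n: "m 0 \<le> n"
      have p1: "0 < b (m (J n))" "0 < b (m (Suc (J n)))" using bpos m0 by auto
      have "a n / b n \<le> a (m (Suc (J n))) / b (m (J n))"
        by (rule frac_le) (use apos ma mb J1[OF n] J2[of n] p1 in \<open>auto simp: mono_def\<close>)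
      also have "\<dots> = a (m (Suc (J n))) / b (m (Suc (J n))) * (b (m (Suc (J n))) / b (m (J n)))"
        using p1 by simp
      finally show "a n / b n \<le> a (m (Suc (J n))) / b (m (Suc (J n))) * (b (m (Suc (J n))) / b (m (J n)))" .
    qed
  qed
qed

lemma sum_pow_bounds:
  fixes H h :: real
  assumes "0 \<le> H" "0 \<le> h"
  shows "real k * H ^ (k - 1) \<le> (\<Sum>i<k. H ^ (k - Suc i) * (H + h) ^ i)"
    and "(\<Sum>i<k. H ^ (k - Suc i) * (H + h) ^ i) \<le> real k * (H + h) ^ (k - 1)"
proof -
  have lo: "H ^ (k - 1) \<le> H ^ (k - Suc i) * (H + h) ^ i" if "i < k" for i
  proof -
    have "H ^ (k - 1) = H ^ (k - Suc i) * H ^ i" using that by (simp add: power_add[symmetric])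
    also have "\<dots> \<le> H ^ (k - Suc i) * (H + h) ^ i" using assms by (intro mult_left_mono power_mono) auto
    finally show ?thesis .
  qed
  have hi: "H ^ (k - Suc i) * (H + h) ^ i \<le> (H + h) ^ (k - 1)" if "i < k" for i
  proof -
    have "H ^ (k - Suc i) * (H + h) ^ i \<le> (H + h) ^ (k - Suc i) * (H + h) ^ i"
      using assms by (intro mult_right_mono power_mono) auto
    also have "\<dots> = (H + h) ^ (k - 1)" using that by (simp add: power_add[symmetric])
    finally show ?thesis .
  qed
  show "real k * H ^ (k - 1) \<le> (\<Sum>i<k. H ^ (k - Suc i) * (H + h) ^ i)"
    using sum_mono[of "{..<k}" "\<lambda>_. H ^ (k - 1)" "\<lambda>i. H ^ (k - Suc i) * (H + h) ^ i"] lo by simp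
  show "(\<Sum>i<k. H ^ (k - Suc i) * (H + h) ^ i) \<le> real k * (H + h) ^ (k - 1)"
    using sum_mono[of "{..<k}" "\<lambda>i. H ^ (k - Suc i) * (H + h) ^ i" "\<lambda>_. (H + h) ^ (k - 1)"] hi by simp
qed

lemma stolz_ratio:
  fixes x :: "nat \<Rightarrow> real"
  assumes k: "1 \<le> k" and lim: "(\<lambda>m. x m / harm m ^ (k - 1)) \<longlonglongrightarrow> c"
  shows "(\<lambda>m. (x m / real (Suc m)) / (harm (Suc m) ^ k - harm m ^ k)) \<longlonglongrightarrow> c / real k"
proof -
  define S where "S m = (\<Sum>i<k. harm m ^ (k - Suc i) * (harm m + inverse (real (Suc m))) ^ i)" for m
  define r where "r m = harm m ^ (k - 1) / S m" for m
  have Hs: "harm (Suc m) = harm m + inverse (real (Suc m))" for m by (simp add: harm_Suc)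
  have diff: "harm (Suc m) ^ k - harm m ^ k = inverse (real (Suc m)) * S m" for m
    unfolding Hs S_def by (subst power_diff_sumr2) simp
  have Slo: "real k * harm m ^ (k - 1) \<le> S m" for m
    unfolding S_def by (rule sum_pow_bounds) (auto simp: harm_nonneg)
  have Shi: "S m \<le> real k * (harm m + inverse (real (Suc m))) ^ (k - 1)" for m
    unfolding S_def by (rule sum_pow_bounds) (auto simp: harm_nonneg)
  have Hpos: "m \<ge> 1 \<Longrightarrow> harm m > (0::real)" for m by simp
  have Spos: "m \<ge> 1 \<Longrightarrow> S m > 0" for m
  proof -
    assume m: "m \<ge> 1"
    have "0 < real k * harm m ^ (k - 1)" using k Hpos[OF m] by simp
    then show ?thesis using Slo[of m] by linarith
  qed
  have eq: "eventually (\<lambda>m. (x m / harm m ^ (k - 1)) * r m = (x m / real (Suc m)) / (harm (Suc m) ^ k - harm m ^ k)) sequentially"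
    unfolding eventually_sequentially
  proof (intro exI[of _ 1] allI impI)
    fix m :: nat assume m: "1 \<le> m"
    have nz: "harm m ^ (k - 1) \<noteq> (0::real)" using Hpos[OF m] by (metis power_not_zero less_irrefl)
    have "(x m / harm m ^ (k - 1)) * r m = x m / S m"
      unfolding r_def using nz by simp
    also have "\<dots> = (x m / real (Suc m)) / (inverse (real (Suc m)) * S m)"
      by (simp add: divide_inverse)
    finally show "(x m / harm m ^ (k - 1)) * r m = (x m / real (Suc m)) / (harm (Suc m) ^ k - harm m ^ k)"
      unfolding diff .
  qed
  have rlim: "r \<longlonglongrightarrow> 1 / real k"
  proof (rule tendsto_sandwich)
    have hinv: "(\<lambda>m. inverse (harm m :: real)) \<longlonglongrightarrow> 0" by (rule tendsto_inverse_0_at_top) (rule harm_at_top)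
    have h0: "(\<lambda>m. inverse (real (Suc m))) \<longlonglongrightarrow> 0" using LIMSEQ_inverse_real_of_nat by simp
    have q: "(\<lambda>m. inverse (1 + inverse (real (Suc m)) * inverse (harm m))) \<longlonglongrightarrow> inverse (1 + 0 * 0)"
      by (intro tendsto_intros h0 hinv) simp
    have "(\<lambda>m. inverse (1 + inverse (real (Suc m)) * inverse (harm m)) ^ (k - 1) / real k) \<longlonglongrightarrow> 1 ^ (k - 1) / real k"
      by (intro tendsto_intros) (use q in simp, use k in simp)
    then show "(\<lambda>m. inverse (1 + inverse (real (Suc m)) * inverse (harm m)) ^ (k - 1) / real k) \<longlonglongrightarrow> 1 / real k" by simp
    show "(\<lambda>m. 1 / real k) \<longlonglongrightarrow> 1 / real k" by simp
    show "eventually (\<lambda>m. inverse (1 + inverse (real (Suc m)) * inverse (harm m)) ^ (k - 1) / real k \<le> r m) sequentially"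
      unfolding eventually_sequentially
    proof (intro exI[of _ 1] allI impI)
      fix m :: nat assume m: "1 \<le> m"
      define H :: real where "H = harm m"
      define h where "h = inverse (real (Suc m))"
      have H: "H > 0" using Hpos[OF m] by (simp add: H_def)
      have h: "h > 0" by (simp add: h_def)
      have "inverse (1 + h * inverse H) = H / (H + h)" using H h by (simp add: field_simps)
      then have "inverse (1 + h * inverse H) ^ (k - 1) / real k = H ^ (k - 1) / (real k * (H + h) ^ (k - 1))"
        by (simp add: power_divide)
      also have "\<dots> \<le> H ^ (k - 1) / S m"
        using Shi[of m] Spos[OF m] H by (intro divide_left_mono) (auto simp: H_def h_def harm_nonneg)
      finally show "inverse (1 + inverse (real (Suc m)) * inverse (harm m)) ^ (k - 1) / real k \<le> r m"
        by (simp add: r_def H_def h_def)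
    qed
    show "eventually (\<lambda>m. r m \<le> 1 / real k) sequentially"
      unfolding eventually_sequentially
    proof (intro exI[of _ 1] allI impI)
      fix m :: nat assume m: "1 \<le> m"
      have p: "0 < real k * harm m ^ (k - 1)" using k Hpos[OF m] by simp
      have "r m \<le> harm m ^ (k - 1) / (real k * harm m ^ (k - 1))"
        unfolding r_def using Slo[of m] p by (intro divide_left_mono) (auto simp: harm_nonneg)
      also have "\<dots> = 1 / real k"
      proof -
        have nz: "harm m ^ (k - 1) \<noteq> (0::real)" using Hpos[OF m] by (metis power_not_zero less_irrefl)
        then show ?thesis by simp
      qed
      finally show "r m \<le> 1 / real k" .
    qed
  qed
  have "(\<lambda>m. (x m / harm m ^ (k - 1)) * r m) \<longlonglongrightarrow> c * (1 / real k)"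
    by (intro tendsto_mult lim rlim)
  then show ?thesis using eq by (simp add: tendsto_cong)
qed

lemma harm_diff_upper:
  assumes "1 \<le> i" "i \<le> m" shows "harm m - harm i \<le> ln (real m) - ln (real i)"
  using assms(2)
proof (induction m rule: dec_induct)
  case base then show ?case by simp
next
  case (step m)
  have m: "real m \<ge> 1" using step assms by simp
  have "ln (real m / (real m + 1)) \<le> real m / (real m + 1) - 1" by (rule ln_le_minus_one) (use m in simp)
  also have "\<dots> = - (1 / (real m + 1))" using m by (simp add: field_simps)
  finally have "1 / (real m + 1) \<le> ln (real m + 1) - ln (real m)" using m by (simp add: ln_div)
  then show ?case using step by (simp add: harm_Suc divide_inverse add.commute)
qed

lemma harm_le_ln: "1 \<le> n \<Longrightarrow> harm n \<le> 1 + ln (real n)"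
  using harm_diff_upper[of 1 n] by (simp add: harm_def)

lemma harm_ge_ln': "1 \<le> n \<Longrightarrow> ln (real n) \<le> harm n"
  using harm_ge_ln[of n] by (smt (verit) ln_le_cancel_iff of_nat_0_less_iff less_le_trans zero_less_one)

lemma harm_pow2_bounds:
  "real n * ln 2 \<le> harm ((2::nat) ^ n)" "harm ((2::nat) ^ n) \<le> 1 + real n * ln 2"
proof -
  have l: "ln (real ((2::nat) ^ n)) = real n * ln 2" by (simp add: ln_realpow)
  show "real n * ln 2 \<le> harm ((2::nat) ^ n)" using harm_ge_ln'[of "2 ^ n"] l by simp
  show "harm ((2::nat) ^ n) \<le> 1 + real n * ln 2" using harm_le_ln[of "2 ^ n"] l by simp
qed

lemma harm_sq_ratio: "(\<lambda>j. harm ((2::nat) ^ (Suc j)^2) / harm ((2::nat) ^ j^2) :: real) \<longlonglongrightarrow> 1"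
proof (rule tendsto_sandwich)
  show "(\<lambda>j. 1::real) \<longlonglongrightarrow> 1" by simp
  have "(\<lambda>j::nat. (1 + (real j + 1)^2 * ln 2) / ((real j)^2 * ln 2)) \<longlonglongrightarrow> 1" by real_asymp
  then show "(\<lambda>j::nat. (1 + real ((Suc j)^2) * ln 2) / (real (j^2) * ln 2)) \<longlonglongrightarrow> 1"
    by (simp add: add.commute)
  show "eventually (\<lambda>j. 1 \<le> (harm ((2::nat) ^ (Suc j)^2) / harm ((2::nat) ^ j^2) :: real)) sequentially"
  proof (rule always_eventually, rule allI)
    fix j :: nat
    have p: "0 < (harm ((2::nat) ^ j^2) :: real)" by simp
    have "j^2 \<le> (Suc j)^2" by (rule power_mono) auto
    then have "(2::nat) ^ j^2 \<le> 2 ^ (Suc j)^2" by (rule power_increasing) simp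
    then have "(harm ((2::nat) ^ j^2) :: real) \<le> harm ((2::nat) ^ (Suc j)^2)"
      by (rule harm_mono)
    then show "1 \<le> (harm ((2::nat) ^ (Suc j)^2) / harm ((2::nat) ^ j^2) :: real)" by (subst le_divide_eq_1_pos[OF p])
  qed
  show "eventually (\<lambda>j. (harm ((2::nat) ^ (Suc j)^2) / harm ((2::nat) ^ j^2) :: real) \<le> (1 + real ((Suc j)^2) * ln 2) / (real (j^2) * ln 2)) sequentially"
    unfolding eventually_sequentially
  proof (intro exI[of _ 1] allI impI)
    fix j :: nat assume j: "1 \<le> j"
    have p: "0 < real (j^2) * ln 2" using j by simp
    show "(harm ((2::nat) ^ (Suc j)^2) / harm ((2::nat) ^ j^2) :: real) \<le> (1 + real ((Suc j)^2) * ln 2) / (real (j^2) * ln 2)"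
      by (rule frac_le) (use harm_pow2_bounds[of "(Suc j)^2"] harm_pow2_bounds[of "j^2"] p in auto)
  qed
qed

lemma floor_pow_tendsto:
  assumes "0 < s"
  shows "filterlim (\<lambda>n::nat. nat \<lfloor>real n powr s\<rfloor>) at_top sequentially"
  unfolding filterlim_at_top
proof
  fix Z :: nat
  have "filterlim (\<lambda>n::nat. real n powr s - 1) at_top sequentially" using assms by real_asymp
  then have "eventually (\<lambda>n. real Z \<le> real n powr s - 1) sequentially" by (simp add: filterlim_at_top)
  then show "eventually (\<lambda>n. Z \<le> nat \<lfloor>real n powr s\<rfloor>) sequentially"
  proof (rule eventually_mono)
    fix n assume "real Z \<le> real n powr s - 1"
    then have "real Z \<le> real_of_int \<lfloor>real n powr s\<rfloor>" by linarith
    then show "Z \<le> nat \<lfloor>real n powr s\<rfloor>" by linarith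
  qed
qed

lemma harm_floor_ratio:
  assumes s: "0 < s"
  shows "(\<lambda>n::nat. harm (nat \<lfloor>real n powr s\<rfloor>) / harm n :: real) \<longlonglongrightarrow> s"
proof (rule tendsto_sandwich)
  show "(\<lambda>n::nat. s * ln (real n) / (1 + ln (real n))) \<longlonglongrightarrow> s" using s by real_asymp
  show "(\<lambda>n::nat. (1 + s * ln (real n)) / ln (real n + 1)) \<longlonglongrightarrow> s" using s by real_asymp
  have bounds: "s * ln (real n) \<le> harm (nat \<lfloor>real n powr s\<rfloor>) \<and> harm (nat \<lfloor>real n powr s\<rfloor>) \<le> 1 + s * ln (real n)
     \<and> ln (real n + 1) \<le> harm n \<and> harm n \<le> 1 + ln (real n) \<and> 0 < ln (real n + 1) \<and> 0 \<le> s * ln (real n)" if n: "n \<ge> 1" for n :: nat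
  proof -
    define x where "x = real n powr s"
    define a where "a = nat \<lfloor>x\<rfloor>"
    have x1: "1 \<le> x" unfolding x_def using n s by (simp add: ge_one_powr_ge_zero)
    have a1: "1 \<le> a" using x1 unfolding a_def by linarith
    have ax: "real a \<le> x" "x \<le> real a + 1" unfolding a_def using x1 by linarith+
    have lx: "ln x = s * ln (real n)" unfolding x_def using n by (simp add: ln_powr)
    have "ln x \<le> ln (real a + 1)" using ax x1 by simp
    also have "\<dots> \<le> harm a" by (rule harm_ge_ln)
    finally have 1: "s * ln (real n) \<le> harm a" using lx by simp
    have "harm a \<le> 1 + ln (real a)" by (rule harm_le_ln[OF a1])
    also have "\<dots> \<le> 1 + ln x" using ax a1 by simp
    finally have 2: "harm a \<le> 1 + s * ln (real n)" using lx by simp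
    have 3: "0 < ln (real n + 1)" using n by simp
    have 4: "0 \<le> s * ln (real n)" using n s by simp
    show ?thesis using 1 2 3 4 harm_ge_ln[of n] harm_le_ln[OF n] unfolding a_def x_def by auto
  qed
  show "eventually (\<lambda>n. s * ln (real n) / (1 + ln (real n)) \<le> harm (nat \<lfloor>real n powr s\<rfloor>) / harm n) sequentially"
    unfolding eventually_sequentially
  proof (intro exI[of _ 1] allI impI)
    fix n :: nat assume n: "1 \<le> n"
    have hp: "0 < (harm n :: real)" using n by simp
    show "s * ln (real n) / (1 + ln (real n)) \<le> harm (nat \<lfloor>real n powr s\<rfloor>) / harm n"
      by (rule frac_le) (use bounds[OF n] hp in auto)
  qed
  show "eventually (\<lambda>n. harm (nat \<lfloor>real n powr s\<rfloor>) / harm n \<le> (1 + s * ln (real n)) / ln (real n + 1)) sequentially"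
    unfolding eventually_sequentially
  proof (intro exI[of _ 1] allI impI)
    fix n :: nat assume n: "1 \<le> n"
    show "harm (nat \<lfloor>real n powr s\<rfloor>) / harm n \<le> (1 + s * ln (real n)) / ln (real n + 1)"
      by (rule frac_le) (use bounds[OF n] in auto)
  qed
qed

lemma ratio_lim:
  fixes N :: "nat \<Rightarrow> real" and a :: "nat \<Rightarrow> nat"
  assumes lim: "(\<lambda>n. N n / harm n ^ k) \<longlonglongrightarrow> c" and c: "c \<noteq> 0"
    and a: "filterlim a at_top sequentially" and h: "(\<lambda>n. harm (a n) / harm n) \<longlonglongrightarrow> s"
  shows "(\<lambda>n. N (a n) / N n) \<longlonglongrightarrow> s ^ k"
proof -
  have la: "(\<lambda>n. N (a n) / harm (a n) ^ k) \<longlonglongrightarrow> c" using filterlim_compose[OF lim a] by simp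
  have "(\<lambda>n. (N (a n) / harm (a n) ^ k) / (N n / harm n ^ k) * (harm (a n) / harm n) ^ k) \<longlonglongrightarrow> c / c * s ^ k"
    by (intro tendsto_intros la lim h c)
  moreover have "eventually (\<lambda>n. (N (a n) / harm (a n) ^ k) / (N n / harm n ^ k) * (harm (a n) / harm n) ^ k = N (a n) / N n) sequentially"
  proof -
    have "eventually (\<lambda>n. 1 \<le> a n) sequentially" using a by (simp add: filterlim_at_top)
    moreover have "eventually (\<lambda>n. 1 \<le> n) sequentially" by (simp add: eventually_ge_at_top)
    ultimately show ?thesis
    proof eventually_elim
      case (elim n)
      define A :: real where "A = harm (a n)"
      define B :: real where "B = harm n"
      have "0 < A" using elim by (simp add: A_def)
      then have A: "A \<noteq> 0" "A ^ k \<noteq> 0" by auto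
      have "0 < B" using elim by (simp add: B_def)
      then have B: "B \<noteq> 0" "B ^ k \<noteq> 0" by auto
      have "(N (a n) / A ^ k) / (N n / B ^ k) * (A / B) ^ k = N (a n) / N n"
      proof (cases "N n = 0")
        case True then show ?thesis by simp
      next
        case False
        then show ?thesis using A B by (simp add: power_divide field_simps)
      qed
      then show ?case by (simp add: A_def B_def)
    qed
  qed
  ultimately show ?thesis using c by (simp add: tendsto_cong)
qed


lemma sum_inv_harm: "i \<le> m \<Longrightarrow> (\<Sum>l\<in>{i..<m}. 1 / real (Suc l)) = harm m - harm i"
proof (induction m rule: dec_induct)
  case base then show ?case by simp
next
  case (step m) then show ?case by (simp add: harm_Suc divide_inverse)
qed

lemma harm_diff_lower: "i \<le> m \<Longrightarrow> ln (real m + 1) - ln (real i + 1) \<le> harm m - harm i"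
proof (induction m rule: dec_induct)
  case base then show ?case by simp
next
  case (step m)
  have "1 + 1 / (real m + 1) = (real m + 2) / (real m + 1)" by (simp add: field_simps)
  then have "ln (real m + 2) - ln (real m + 1) = ln (1 + 1 / (real m + 1))"
    by (simp add: ln_div)
  also have "\<dots> \<le> 1 / (real m + 1)" by (rule ln_add_one_self_le_self) simp
  finally have "ln (real m + 2) - ln (real m + 1) \<le> inverse (real (Suc m))" by (simp add: divide_inverse add.commute)
  then show ?case using step by (simp add: harm_Suc add.commute)
qed

lemma prod_le_exp:
  assumes "x \<ge> -1" "i \<le> m"
  shows "(\<Prod>l\<in>{i..<m}. 1 + x / real (Suc l)) \<le> exp (x * (harm m - harm i))"
proof -
  have "(\<Prod>l\<in>{i..<m}. 1 + x / real (Suc l)) \<le> (\<Prod>l\<in>{i..<m}. exp (x / real (Suc l)))"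
  proof (rule prod_mono, rule conjI)
    fix l
    have "-1 / real (Suc l) \<le> x / real (Suc l)" by (rule divide_right_mono) (use assms in auto)
    moreover have "-1 / real (Suc l) \<ge> -1" by (simp add: field_simps)
    ultimately show "0 \<le> 1 + x / real (Suc l)" by linarith
    show "1 + x / real (Suc l) \<le> exp (x / real (Suc l))" by (rule exp_ge_add_one_self)
  qed
  also have "\<dots> = exp (\<Sum>l\<in>{i..<m}. x / real (Suc l))" by (simp add: exp_sum)
  also have "(\<Sum>l\<in>{i..<m}. x / real (Suc l)) = x * (harm m - harm i)"
  proof -
    have "(\<Sum>l\<in>{i..<m}. x / real (Suc l)) = x * (\<Sum>l\<in>{i..<m}. 1 / real (Suc l))"
      by (simp add: sum_distrib_left)
    then show ?thesis using sum_inv_harm[OF assms(2)] by simp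
  qed
  finally show ?thesis .
qed

abbreviation qq :: "nat \<Rightarrow> nat \<Rightarrow> real" where
  "qq k i \<equiv> EE i (\<lambda>w. ind (depth w i = k))"

lemma chern_low:
  assumes "\<theta> > 0" "i \<le> m"
  shows "EE m (\<lambda>w. ind (depth w i = k \<and> real (Cc w i m) \<le> y))
     \<le> qq k i * exp (\<theta> * y - (1 - exp (-\<theta>)) * (harm m - harm i))"
proof -
  have "EE m (\<lambda>w. ind (depth w i = k \<and> real (Cc w i m) \<le> y))
      \<le> EE m (\<lambda>w. ind (depth w i = k) * exp ((-\<theta>) * real (Cc w i m)) * exp (\<theta> * y))"
  proof (rule EE_mono)
    fix w
    show "ind (depth w i = k \<and> real (Cc w i m) \<le> y) \<le> ind (depth w i = k) * exp ((-\<theta>) * real (Cc w i m)) * exp (\<theta> * y)"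
    proof (cases "depth w i = k \<and> real (Cc w i m) \<le> y")
      case True
      then have "0 \<le> (-\<theta>) * real (Cc w i m) + \<theta> * y" using assms by (simp add: algebra_simps mult_left_mono)
      then have "1 \<le> exp ((-\<theta>) * real (Cc w i m) + \<theta> * y)" by simp
      moreover have "exp ((-\<theta>) * real (Cc w i m)) * exp (\<theta> * y) = exp ((-\<theta>) * real (Cc w i m) + \<theta> * y)"
        by (simp only: exp_add)
      ultimately show ?thesis using True by simp
    qed (auto simp: ind_def)
  qed
  also have "\<dots> = qq k i * (\<Prod>l\<in>{i..<m}. 1 + (exp (-\<theta>) - 1) / real (Suc l)) * exp (\<theta> * y)"
    by (simp only: EE_multc EE_exp[OF assms(2)])
  also have "\<dots> \<le> qq k i * exp ((exp (-\<theta>) - 1) * (harm m - harm i)) * exp (\<theta> * y)"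
    by (intro mult_right_mono mult_left_mono prod_le_exp assms EE_nonneg) (auto simp: ind_nonneg)
  also have "\<dots> = qq k i * exp (\<theta> * y - (1 - exp (-\<theta>)) * (harm m - harm i))"
    by (simp add: exp_add[symmetric] algebra_simps)
  finally show ?thesis .
qed

lemma chern_up:
  assumes "\<theta> > 0" "i \<le> m"
  shows "EE m (\<lambda>w. ind (depth w i = k \<and> y \<le> real (Cc w i m)))
     \<le> qq k i * exp (- \<theta> * y + (exp \<theta> - 1) * (harm m - harm i))"
proof -
  have "EE m (\<lambda>w. ind (depth w i = k \<and> y \<le> real (Cc w i m)))
      \<le> EE m (\<lambda>w. ind (depth w i = k) * exp (\<theta> * real (Cc w i m)) * exp (- \<theta> * y))"
  proof (rule EE_mono)
    fix w
    show "ind (depth w i = k \<and> y \<le> real (Cc w i m)) \<le> ind (depth w i = k) * exp (\<theta> * real (Cc w i m)) * exp (- \<theta> * y)"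
    proof (cases "depth w i = k \<and> y \<le> real (Cc w i m)")
      case True
      then have "0 \<le> \<theta> * real (Cc w i m) + (- \<theta>) * y" using assms by (simp add: algebra_simps mult_left_mono)
      then have "1 \<le> exp (\<theta> * real (Cc w i m) + (- \<theta>) * y)" by simp
      moreover have "exp (\<theta> * real (Cc w i m)) * exp (- \<theta> * y) = exp (\<theta> * real (Cc w i m) + (- \<theta>) * y)"
        by (simp only: exp_add)
      ultimately show ?thesis using True by simp
    qed (auto simp: ind_def)
  qed
  also have "\<dots> = qq k i * (\<Prod>l\<in>{i..<m}. 1 + (exp \<theta> - 1) / real (Suc l)) * exp (- \<theta> * y)"
    by (simp only: EE_multc EE_exp[OF assms(2)])
  also have "\<dots> \<le> qq k i * exp ((exp \<theta> - 1) * (harm m - harm i)) * exp (- \<theta> * y)"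
    using assms by (intro mult_right_mono mult_left_mono prod_le_exp EE_nonneg) (auto simp: ind_nonneg)
  also have "\<dots> = qq k i * exp (- \<theta> * y + (exp \<theta> - 1) * (harm m - harm i))"
    by (simp add: exp_add[symmetric] algebra_simps)
  finally show ?thesis .
qed

lemma summable_poly_exp:
  fixes a g c :: real
  assumes "0 < g" "0 < a"
  shows "summable (\<lambda>j::nat. (1 + (real j + 1) * a) ^ k * exp (c - g * real j))"
proof -
  have "((\<lambda>x::real. (1 + (x + 1) * a) ^ k * exp (- (g/2) * x)) \<longlongrightarrow> 0) at_top"
    using assms by real_asymp
  then have "(\<lambda>j::nat. (1 + (real j + 1) * a) ^ k * exp (- (g/2) * real j)) \<longlonglongrightarrow> 0"
    by (rule filterlim_compose) (rule filterlim_real_sequentially)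
  then have "eventually (\<lambda>j. (1 + (real j + 1) * a) ^ k * exp (- (g/2) * real j) < 1) sequentially"
    by (rule order_tendstoD) simp
  then obtain N where N: "\<And>j. j \<ge> N \<Longrightarrow> (1 + (real j + 1) * a) ^ k * exp (- (g/2) * real j) < 1"
    by (auto simp: eventually_sequentially)
  show ?thesis
  proof (rule summable_comparison_test')
    show "summable (\<lambda>j. exp c * exp (- (g/2)) ^ j)"
      using assms by (intro summable_mult summable_geometric) simp
    fix j assume "N \<le> j"
    have pos: "0 \<le> (1 + (real j + 1) * a) ^ k" using assms by simp
    have "(1 + (real j + 1) * a) ^ k * exp (c - g * real j) = ((1 + (real j + 1) * a) ^ k * exp (- (g/2) * real j)) * (exp c * exp (- (g/2) * real j))"
      by (simp add: exp_add[symmetric] exp_diff algebra_simps)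
    also have "\<dots> \<le> 1 * (exp c * exp (- (g/2) * real j))"
      using N[OF \<open>N \<le> j\<close>] by (intro mult_right_mono) auto
    also have "exp (- (g/2) * real j) = exp (- (g/2)) ^ j" by (simp add: exp_of_nat_mult[symmetric] mult.commute)
    finally show "norm ((1 + (real j + 1) * a) ^ k * exp (c - g * real j)) \<le> exp c * exp (- (g/2)) ^ j"
      using pos by simp
  qed
qed


definition msq :: "nat \<Rightarrow> nat" where "msq j = 2 ^ (j^2)"

lemma msq_pos: "1 \<le> msq j" by (simp add: msq_def)

lemma strict_mono_msq: "strict_mono msq"
proof (rule strict_monoI_Suc)
  fix j :: nat
  have "j^2 < (Suc j)^2" by (simp add: power2_eq_square)
  then show "msq j < msq (Suc j)" unfolding msq_def by (rule power_strict_increasing) simp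
qed

lemma harm_msq_lower: "real (j^2) * ln 2 \<le> harm (msq j)"
  unfolding msq_def by (rule harm_pow2_bounds)

lemma Mg_sub_AE:
  assumes k: "1 \<le> k"
  shows "AE w in RRT. (\<lambda>j. Mg k w (msq j) / harm (msq j) ^ k) \<longlonglongrightarrow> 0"
proof -
  have ev: "AE w in RRT. eventually (\<lambda>j. \<bar>Mg k w (msq j)\<bar> < harm (msq j) ^ k / real (Suc r)) sequentially" for r
  proof -
    define \<epsilon> where "\<epsilon> = 1 / real (Suc r)"
    have e: "0 < \<epsilon>" by (simp add: \<epsilon>_def)
    define A where "A j = {w \<in> space RRT. harm (msq j) ^ k / real (Suc r) \<le> \<bar>Mg k w (msq j)\<bar>}" for j
    have locA: "loc (msq j) (\<lambda>w. harm (msq j) ^ k / real (Suc r) \<le> \<bar>Mg k w (msq j)\<bar>)" for j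
      by (rule loc_Mg)
    have Asets: "A j \<in> sets RRT" for j unfolding A_def by (rule loc_pred_sets[OF locA])
    have Aprob: "R.prob (A j) \<le> 1 / (\<epsilon>^2 * harm (msq j) ^ k)" for j
    proof -
      define H where "H = (harm (msq j) :: real)"
      have H1: "1 \<le> H" unfolding H_def msq_def
        using harm_mono[of 1 "2 ^ j^2"] by (simp add: harm_def)
      have Hk: "0 < H ^ k" using H1 by simp
      have "R.prob (A j) = EE (msq j) (\<lambda>w. if H ^ k / real (Suc r) \<le> \<bar>Mg k w (msq j)\<bar> then 1 else 0)"
        unfolding A_def H_def by (rule prob_loc[OF locA])
      also have "\<dots> \<le> EE (msq j) (\<lambda>w. if (\<epsilon> * H ^ k)^2 \<le> (Mg k w (msq j))^2 then 1 else 0)"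
      proof (rule EE_mono)
        fix w
        have "H ^ k / real (Suc r) \<le> \<bar>Mg k w (msq j)\<bar> \<Longrightarrow> (\<epsilon> * H ^ k)^2 \<le> (Mg k w (msq j))^2"
        proof -
          assume a: "H ^ k / real (Suc r) \<le> \<bar>Mg k w (msq j)\<bar>"
          have a1: "0 \<le> \<epsilon> * H ^ k" using e Hk by simp
          have a2: "\<epsilon> * H ^ k \<le> \<bar>Mg k w (msq j)\<bar>" using a by (simp add: \<epsilon>_def)
          have "(\<epsilon> * H ^ k)^2 \<le> \<bar>Mg k w (msq j)\<bar>^2" by (rule power_mono[OF a2 a1])
          then show ?thesis by simp
        qed
        then show "(if H ^ k / real (Suc r) \<le> \<bar>Mg k w (msq j)\<bar> then 1 else 0) \<le> (if (\<epsilon> * H ^ k)^2 \<le> (Mg k w (msq j))^2 then 1 else 0 :: real)"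
          by auto
      qed
      also have "\<dots> \<le> EE (msq j) (\<lambda>w. (Mg k w (msq j))^2) / (\<epsilon> * H ^ k)^2"
      proof (rule EE_markov)
        show "0 < (\<epsilon> * H ^ k)^2" using e Hk by (metis mult_pos_pos zero_less_power)
      qed simp
      also have "\<dots> \<le> H ^ k / (\<epsilon> * H ^ k)^2"
        using EE_Mg_sq[OF k, of "msq j"] ee_le[of k "msq j"] e Hk
        by (intro divide_right_mono) (auto simp: H_def)
      also have "\<dots> = 1 / (\<epsilon>^2 * H ^ k)" using Hk e by (simp add: power_mult_distrib power2_eq_square)
      finally show ?thesis by (simp add: H_def)
    qed
    have summ: "summable (\<lambda>j. R.prob (A j))"
    proof (rule summable_comparison_test')
      show "summable (\<lambda>j. 1 / (\<epsilon>^2 * ln 2) * inverse (real j ^ 2))"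
        by (intro summable_mult inverse_power_summable) auto
      fix j :: nat assume j: "1 \<le> j"
      define H where "H = (harm (msq j) :: real)"
      have H1: "1 \<le> H" unfolding H_def msq_def
        using harm_mono[of 1 "2 ^ j^2"] by (simp add: harm_def)
      have HH: "H \<le> H ^ k" using H1 k by (metis One_nat_def power_increasing power_one_right)
      have Hj: "real j ^ 2 * ln 2 \<le> H" using harm_msq_lower[of j] by (simp add: H_def)
      have p: "0 < real j ^ 2 * ln 2" using j by simp
      have Hk: "0 < H ^ k" using H1 by simp
      have "norm (R.prob (A j)) = R.prob (A j)" by simp
      also have "\<dots> \<le> 1 / (\<epsilon>^2 * H ^ k)" using Aprob[of j] by (simp add: H_def)
      also have "\<dots> \<le> 1 / (\<epsilon>^2 * (real j ^ 2 * ln 2))"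
        using e p Hj HH j Hk by (intro divide_left_mono mult_left_mono mult_pos_pos) auto
      also have "\<dots> = 1 / (\<epsilon>^2 * ln 2) * inverse (real j ^ 2)" by (simp add: field_simps)
      finally show "norm (R.prob (A j)) \<le> 1 / (\<epsilon>^2 * ln 2) * inverse (real j ^ 2)" .
    qed
    have "AE w in RRT. eventually (\<lambda>j. w \<in> space RRT - A j) sequentially"
      by (rule borel_cantelli_AE1) (use Asets summ in \<open>auto simp: R.emeasure_eq_measure\<close>)
    then show ?thesis by (auto simp: A_def not_le)
  qed
  then have "AE w in RRT. \<forall>r. eventually (\<lambda>j. \<bar>Mg k w (msq j)\<bar> < harm (msq j) ^ k / real (Suc r)) sequentially"
    by (simp add: AE_all_countable)
  then show ?thesis
  proof (rule AE_mp, intro AE_I2 impI)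
    fix w assume "w \<in> space RRT" and w: "\<forall>r. eventually (\<lambda>j. \<bar>Mg k w (msq j)\<bar> < harm (msq j) ^ k / real (Suc r)) sequentially"
    show "(\<lambda>j. Mg k w (msq j) / harm (msq j) ^ k) \<longlonglongrightarrow> 0"
    proof (rule LIMSEQ_I)
      fix e :: real assume e: "0 < e"
      obtain r where r: "1 / real (Suc r) < e" using e by (metis nat_approx_posE)
      obtain N where N: "\<And>j. j \<ge> N \<Longrightarrow> \<bar>Mg k w (msq j)\<bar> < harm (msq j) ^ k / real (Suc r)"
        using w[rule_format, of r] by (auto simp: eventually_sequentially)
      show "\<exists>no. \<forall>j\<ge>no. norm (Mg k w (msq j) / harm (msq j) ^ k - 0) < e"
      proof (intro exI allI impI)
        fix j assume j: "j \<ge> N"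
        have Hk: "0 < (harm (msq j) ^ k :: real)" using msq_pos[of j] by simp
        have "\<bar>Mg k w (msq j)\<bar> / harm (msq j) ^ k < 1 / real (Suc r)"
        proof -
          have "\<bar>Mg k w (msq j)\<bar> < 1 / real (Suc r) * harm (msq j) ^ k" using N[OF j] by simp
          then show ?thesis using Hk by (metis pos_divide_less_eq)
        qed
        then show "norm (Mg k w (msq j) / harm (msq j) ^ k - 0) < e"
        proof -
          have "norm (Mg k w (msq j) / harm (msq j) ^ k - 0) = \<bar>Mg k w (msq j)\<bar> / harm (msq j) ^ k"
            using Hk by (metis abs_div_pos diff_zero real_norm_def)
          then show ?thesis using r \<open>\<bar>Mg k w (msq j)\<bar> / harm (msq j) ^ k < 1 / real (Suc r)\<close> by linarith
        qed
      qed
    qed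
  qed
qed

lemma step1_path:
  assumes k: "1 \<le> k"
    and IH: "(\<lambda>n. real (NN w (k - 1) n) / harm n ^ (k - 1)) \<longlonglongrightarrow> 1 / fact (k - 1)"
    and Mlim: "(\<lambda>j. Mg k w (msq j) / harm (msq j) ^ k) \<longlonglongrightarrow> 0"
  shows "(\<lambda>n. real (NN w k n) / harm n ^ k) \<longlonglongrightarrow> 1 / fact k"
proof -
  define Sg where "Sg m = (\<Sum>j<m. real (NN w (k - 1) j) / real (Suc j))" for m
  have dec: "real (NN w k m) = Mg k w m + Sg m" for m
    unfolding NN_as_sum[OF k] Mg_def Sg_def by (simp add: sum_subtractf)
  have fk: "(1 / fact (k - 1)) / real k = (1 / fact k :: real)"
    using fact_reduce[of k, where 'a=real] k by (simp add: mult.commute)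
  have Slim: "(\<lambda>m. Sg m / harm m ^ k) \<longlonglongrightarrow> 1 / fact k"
  proof (rule stolz)
    fix n :: nat
    have "harm n < (harm (Suc n) :: real)" by (simp add: harm_Suc)
    then show "harm n ^ k < (harm (Suc n) ^ k :: real)"
      using k by (intro power_strict_mono) (auto simp: harm_nonneg)
  next
    show "filterlim (\<lambda>m. harm m ^ k :: real) at_top sequentially"
      using k by (intro filterlim_pow_at_top harm_at_top) auto
  next
    have "(\<lambda>m. (real (NN w (k - 1) m) / real (Suc m)) / (harm (Suc m) ^ k - harm m ^ k)) \<longlonglongrightarrow> (1 / fact (k - 1)) / real k"
      by (rule stolz_ratio[OF k IH])
    moreover have "Sg (Suc m) - Sg m = real (NN w (k - 1) m) / real (Suc m)" for m
      by (simp add: Sg_def)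
    ultimately show "(\<lambda>m. (Sg (Suc m) - Sg m) / (harm (Suc m) ^ k - harm m ^ k)) \<longlonglongrightarrow> 1 / fact k"
      using fk by simp
  qed
  have Ssub: "(\<lambda>j. Sg (msq j) / harm (msq j) ^ k) \<longlonglongrightarrow> 1 / fact k"
    using LIMSEQ_subseq_LIMSEQ[OF Slim strict_mono_msq] by (simp add: comp_def)
  have Nsub: "(\<lambda>j. real (NN w k (msq j)) / harm (msq j) ^ k) \<longlonglongrightarrow> 1 / fact k"
  proof -
    have "(\<lambda>j. Mg k w (msq j) / harm (msq j) ^ k + Sg (msq j) / harm (msq j) ^ k) \<longlonglongrightarrow> 0 + 1 / fact k"
      by (intro tendsto_add Mlim Ssub)
    then show ?thesis by (simp add: dec add_divide_distrib)
  qed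
  show ?thesis
  proof (rule interp[OF _ _ _ _ strict_mono_msq Nsub])
    show "mono (\<lambda>n. real (NN w k n))" by (rule monoI) (simp add: NN_mono)
    show "mono (\<lambda>n. harm n ^ k :: real)"
      by (rule monoI) (intro power_mono harm_mono, auto simp: harm_nonneg)
    show "0 < (harm n ^ k :: real)" if "msq 0 \<le> n" for n
      using that by (simp add: msq_def)
    show "0 \<le> real (NN w k n)" for n by simp
    have "(\<lambda>j. (harm (msq (Suc j)) / harm (msq j)) ^ k :: real) \<longlonglongrightarrow> 1 ^ k"
      by (intro tendsto_power) (simp add: msq_def harm_sq_ratio)
    then show "(\<lambda>j. harm (msq (Suc j)) ^ k / harm (msq j) ^ k :: real) \<longlonglongrightarrow> 1"
      by (simp add: power_divide)
  qed
qed

lemma level_asym_k: "AE w in RRT. (\<lambda>n. real (NN w k n) / harm n ^ k) \<longlonglongrightarrow> 1 / fact k"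
proof (induction k)
  case 0
  show ?case by (simp add: NN_0)
next
  case (Suc k)
  have "AE w in RRT. (\<lambda>j. Mg (Suc k) w (msq j) / harm (msq j) ^ Suc k) \<longlonglongrightarrow> 0"
    by (rule Mg_sub_AE) simp
  with Suc show ?case
    by eventually_elim (rule step1_path, auto)
qed

lemma level_asym: "AE w in RRT. \<forall>k. (\<lambda>n. real (NN w k n) / harm n ^ k) \<longlonglongrightarrow> 1 / fact k"
  using level_asym_k by (simp add: AE_all_countable)


lemma EE_ind_ex:
  assumes "finite I"
  shows "EE m (\<lambda>w. ind (\<exists>i\<in>I. P i w)) \<le> (\<Sum>i\<in>I. EE m (\<lambda>w. ind (P i w)))"
proof -
  have "EE m (\<lambda>w. ind (\<exists>i\<in>I. P i w)) \<le> EE m (\<lambda>w. \<Sum>i\<in>I. ind (P i w))"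
  proof (rule EE_mono)
    fix w
    show "ind (\<exists>i\<in>I. P i w) \<le> (\<Sum>i\<in>I. ind (P i w))"
    proof (cases "\<exists>i\<in>I. P i w")
      case True
      then obtain i0 where i0: "i0 \<in> I" "P i0 w" by blast
      have "ind (P i0 w) \<le> (\<Sum>i\<in>I. ind (P i w))"
        by (rule member_le_sum[OF i0(1)]) (auto simp: ind_nonneg assms)
      then show ?thesis using True i0 by simp
    qed (simp add: sum_nonneg ind_nonneg)
  qed
  also have "\<dots> = (\<Sum>i\<in>I. EE m (\<lambda>w. ind (P i w)))" by (rule EE_sum[OF assms])
  finally show ?thesis .
qed

lemma sum_qq_le:
  assumes "I \<subseteq> {..a}" "a \<le> 2 ^ Suc j"
  shows "(\<Sum>i\<in>I. qq k i) \<le> (1 + (real j + 1) * ln 2) ^ k"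
proof -
  have "(\<Sum>i\<in>I. qq k i) \<le> (\<Sum>i\<le>a. qq k i)"
    using assms by (intro sum_mono2) (auto simp: EE_depth_nonneg)
  also have "\<dots> = ee k a" by (simp add: ee_sum_depth)
  also have "\<dots> \<le> harm a ^ k" by (rule ee_le)
  also have "\<dots> \<le> harm ((2::nat) ^ Suc j) ^ k"
    using assms by (intro power_mono harm_mono) (auto simp: harm_nonneg)
  also have "\<dots> \<le> (1 + (real j + 1) * ln 2) ^ k"
    using harm_pow2_bounds(2)[of "Suc j"] by (intro power_mono) (auto simp: harm_nonneg add.commute)
  finally show ?thesis .
qed

definition B1 :: "nat \<Rightarrow> real \<Rightarrow> real \<Rightarrow> nat \<Rightarrow> (nat \<Rightarrow> nat) \<Rightarrow> bool" where
  "B1 k t \<delta> j w \<longleftrightarrow> (\<exists>i\<in>{i. i \<le> 2 ^ j \<and> real i \<le> 2 powr (real (Suc j) * (1 - t - \<delta>))}.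
      depth w i = k \<and> real (Cc w i (2 ^ j)) \<le> t * real (Suc j) * ln 2)"

definition B2 :: "nat \<Rightarrow> real \<Rightarrow> real \<Rightarrow> nat \<Rightarrow> (nat \<Rightarrow> nat) \<Rightarrow> bool" where
  "B2 k t \<delta> j w \<longleftrightarrow> (\<exists>i\<in>{i. i \<le> 2 ^ Suc j \<and> 2 powr (real j * (1 - t + \<delta>)) \<le> real i}.
      depth w i = k \<and> t * real j * ln 2 - 1 \<le> real (Cc w i (2 ^ Suc j)))"

lemma loc_B1: "loc (2 ^ j) (B1 k t \<delta> j)"
proof -
  have "B1 k t \<delta> j w = B1 k t \<delta> j w'" if "\<forall>l<2 ^ j. w l = w' l" for w w'
  proof -
    have "depth w i = depth w' i \<and> Cc w i (2 ^ j) = Cc w' i (2 ^ j)" if "i \<le> 2 ^ j" for i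
      using that \<open>\<forall>l<2 ^ j. w l = w' l\<close> by (auto intro!: depth_local Cc_local)
    then show ?thesis unfolding B1_def by auto
  qed
  then show ?thesis unfolding loc_def by blast
qed

lemma loc_B2: "loc (2 ^ Suc j) (B2 k t \<delta> j)"
proof -
  have "B2 k t \<delta> j w = B2 k t \<delta> j w'" if "\<forall>l<2 ^ Suc j. w l = w' l" for w w'
  proof -
    have "depth w i = depth w' i \<and> Cc w i (2 ^ Suc j) = Cc w' i (2 ^ Suc j)" if "i \<le> 2 ^ Suc j" for i
      using that \<open>\<forall>l<2 ^ Suc j. w l = w' l\<close> by (auto intro!: depth_local Cc_local)
    then show ?thesis unfolding B2_def by auto
  qed
  then show ?thesis unfolding loc_def by blast
qed

lemma prob_loc_ind: "loc m P \<Longrightarrow> R.prob {w \<in> space RRT. P w} = EE m (\<lambda>w. ind (P w))"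
  using prob_loc[of m P] by (simp add: ind_def)

lemma B1_prob:
  assumes t: "0 < t" and d: "0 < \<delta>" and td: "t + \<delta> < 1"
  shows "R.prob {w \<in> space RRT. B1 k t \<delta> j w}
    \<le> (1 + (real j + 1) * ln 2) ^ k * exp (\<delta> * t * real (Suc j) * ln 2 - (1 - exp (-\<delta>)) * (real j * ln 2 - ln 2 - real (Suc j) * (1 - t - \<delta>) * ln 2))"
proof -
  define X where "X = (2::real) powr (real (Suc j) * (1 - t - \<delta>))"
  define I where "I = {i. i \<le> (2::nat) ^ j \<and> real i \<le> X}"
  define y where "y = t * real (Suc j) * ln 2"
  define c where "c = 1 - exp (-\<delta>)"
  define D where "D = real j * ln 2 - ln 2 - real (Suc j) * (1 - t - \<delta>) * ln 2"
  have c0: "0 \<le> c" using d by (simp add: c_def)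
  have X1: "1 \<le> X" unfolding X_def using td by (intro ge_one_powr_ge_zero) auto
  have lnX: "ln X = real (Suc j) * (1 - t - \<delta>) * ln 2" by (simp add: X_def)
  have finI: "finite I" unfolding I_def by simp
  have "R.prob {w \<in> space RRT. B1 k t \<delta> j w} = EE (2 ^ j) (\<lambda>w. ind (B1 k t \<delta> j w))"
    by (rule prob_loc_ind[OF loc_B1])
  also have "\<dots> = EE (2 ^ j) (\<lambda>w. ind (\<exists>i\<in>I. depth w i = k \<and> real (Cc w i (2 ^ j)) \<le> y))"
    by (simp add: B1_def I_def X_def y_def)
  also have "\<dots> \<le> (\<Sum>i\<in>I. EE (2 ^ j) (\<lambda>w. ind (depth w i = k \<and> real (Cc w i (2 ^ j)) \<le> y)))"
    by (rule EE_ind_ex[OF finI])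
  also have "\<dots> \<le> (\<Sum>i\<in>I. qq k i * exp (\<delta> * y - c * D))"
  proof (rule sum_mono)
    fix i assume iI: "i \<in> I"
    then have i: "i \<le> 2 ^ j" "real i \<le> X" by (auto simp: I_def)
    have "EE (2 ^ j) (\<lambda>w. ind (depth w i = k \<and> real (Cc w i (2 ^ j)) \<le> y))
        \<le> qq k i * exp (\<delta> * y - c * (harm (2 ^ j) - harm i))"
      unfolding c_def by (rule chern_low[OF d i(1)])
    also have "\<dots> \<le> qq k i * exp (\<delta> * y - c * D)"
    proof -
      have "ln (real ((2::nat) ^ j)) \<le> ln (real ((2::nat) ^ j) + 1)" 
      proof -
        have p: "0 < real ((2::nat) ^ j)" by simp
        then show ?thesis by (subst ln_le_cancel_iff) (use p in linarith)+
      qed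
      moreover have "ln (real i + 1) \<le> ln (2 * X)" using i X1 by simp
      moreover have "ln (2 * X) = ln 2 + real (Suc j) * (1 - t - \<delta>) * ln 2"
        using X1 by (simp add: ln_mult lnX)
      moreover have "ln (real ((2::nat) ^ j)) = real j * ln 2" by (simp add: ln_realpow)
      ultimately have "D \<le> ln (real ((2::nat) ^ j) + 1) - ln (real i + 1)" unfolding D_def by linarith
      also have "\<dots> \<le> harm (2 ^ j) - harm i" by (rule harm_diff_lower[OF i(1)])
      finally have "c * D \<le> c * (harm (2 ^ j) - harm i)" using c0 by (intro mult_left_mono) auto
      then show ?thesis by (intro mult_left_mono EE_depth_nonneg) auto
    qed
    finally show "EE (2 ^ j) (\<lambda>w. ind (depth w i = k \<and> real (Cc w i (2 ^ j)) \<le> y)) \<le> qq k i * exp (\<delta> * y - c * D)" .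
  qed
  also have "\<dots> = (\<Sum>i\<in>I. qq k i) * exp (\<delta> * y - c * D)" by (simp add: sum_distrib_right)
  also have "\<dots> \<le> (1 + (real j + 1) * ln 2) ^ k * exp (\<delta> * y - c * D)"
  proof (intro mult_right_mono sum_qq_le)
    show "I \<subseteq> {..nat \<lfloor>X\<rfloor>}" unfolding I_def by auto (linarith)
    have "X \<le> 2 powr real (Suc j)" unfolding X_def using t d by (intro powr_mono) (auto simp: mult_le_cancel_left1)
    also have "\<dots> = 2 ^ Suc j" by (rule powr_realpow) simp
    finally have "X \<le> real ((2::nat) ^ Suc j)" by simp
    moreover have "real_of_int \<lfloor>X\<rfloor> \<le> X" by (rule of_int_floor_le)
    ultimately have "real_of_int \<lfloor>X\<rfloor> \<le> real ((2::nat) ^ Suc j)" by linarith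
    then have "\<lfloor>X\<rfloor> \<le> int ((2::nat) ^ Suc j)" by linarith
    then show "nat \<lfloor>X\<rfloor> \<le> 2 ^ Suc j" by (simp add: nat_le_iff)
  qed simp
  finally show ?thesis by (simp add: y_def c_def D_def mult.assoc)
qed

lemma B2_prob:
  assumes t: "0 < t" "t < 1" and d: "0 < \<delta>" "\<delta> < t" and th: "0 < \<theta>"
  shows "R.prob {w \<in> space RRT. B2 k t \<delta> j w}
    \<le> (1 + (real j + 1) * ln 2) ^ k * exp (- \<theta> * (t * real j * ln 2 - 1) + (exp \<theta> - 1) * (real (Suc j) * ln 2 - real j * (1 - t + \<delta>) * ln 2))"
proof -
  define X where "X = (2::real) powr (real j * (1 - t + \<delta>))"
  define M where "M = (2::nat) ^ Suc j"
  define I where "I = {i. i \<le> M \<and> X \<le> real i}"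
  define y where "y = t * real j * ln 2 - 1"
  define c where "c = exp \<theta> - 1"
  define E where "E = real (Suc j) * ln 2 - real j * (1 - t + \<delta>) * ln 2"
  have c0: "0 \<le> c" using th by (simp add: c_def)
  have X1: "1 \<le> X" unfolding X_def using t d by (intro ge_one_powr_ge_zero) auto
  have lnX: "ln X = real j * (1 - t + \<delta>) * ln 2" by (simp add: X_def)
  have finI: "finite I" unfolding I_def by simp
  have "R.prob {w \<in> space RRT. B2 k t \<delta> j w} = EE M (\<lambda>w. ind (B2 k t \<delta> j w))"
    unfolding M_def by (rule prob_loc_ind[OF loc_B2])
  also have "\<dots> = EE M (\<lambda>w. ind (\<exists>i\<in>I. depth w i = k \<and> y \<le> real (Cc w i M)))"
    by (simp add: B2_def I_def X_def y_def M_def)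
  also have "\<dots> \<le> (\<Sum>i\<in>I. EE M (\<lambda>w. ind (depth w i = k \<and> y \<le> real (Cc w i M))))"
    by (rule EE_ind_ex[OF finI])
  also have "\<dots> \<le> (\<Sum>i\<in>I. qq k i * exp (- \<theta> * y + c * E))"
  proof (rule sum_mono)
    fix i assume iI: "i \<in> I"
    then have i: "i \<le> M" "X \<le> real i" by (auto simp: I_def)
    have i1: "1 \<le> i" using i X1 by linarith
    have "EE M (\<lambda>w. ind (depth w i = k \<and> y \<le> real (Cc w i M)))
        \<le> qq k i * exp (- \<theta> * y + c * (harm M - harm i))"
      unfolding c_def by (rule chern_up[OF th i(1)])
    also have "\<dots> \<le> qq k i * exp (- \<theta> * y + c * E)"
    proof -
      have "harm M - harm i \<le> ln (real M) - ln (real i)" by (rule harm_diff_upper[OF i1 i(1)])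
      moreover have "ln X \<le> ln (real i)" using i X1 by simp
      moreover have "ln (real M) = real (Suc j) * ln 2" unfolding M_def using ln_realpow[of 2 "Suc j"] by simp
      ultimately have "harm M - harm i \<le> E" unfolding E_def using lnX by linarith
      then have "c * (harm M - harm i) \<le> c * E" using c0 by (intro mult_left_mono) auto
      then show ?thesis by (intro mult_left_mono EE_depth_nonneg) auto
    qed
    finally show "EE M (\<lambda>w. ind (depth w i = k \<and> y \<le> real (Cc w i M))) \<le> qq k i * exp (- \<theta> * y + c * E)" .
  qed
  also have "\<dots> = (\<Sum>i\<in>I. qq k i) * exp (- \<theta> * y + c * E)" by (simp add: sum_distrib_right)
  also have "\<dots> \<le> (1 + (real j + 1) * ln 2) ^ k * exp (- \<theta> * y + c * E)"
  proof (intro mult_right_mono sum_qq_le)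
    show "I \<subseteq> {..M}" unfolding I_def by auto
    show "M \<le> 2 ^ Suc j" by (simp add: M_def)
  qed simp
  finally show ?thesis by (simp add: y_def c_def E_def)
qed

lemma AE_from_summable:
  assumes locP: "\<And>j. loc (m j) (P j)"
    and bnd: "\<And>j. R.prob {w \<in> space RRT. P j w} \<le> f j" and sf: "summable f"
  shows "AE w in RRT. eventually (\<lambda>j. \<not> P j w) sequentially"
proof -
  have sets: "{w \<in> space RRT. P j w} \<in> sets RRT" for j by (rule loc_pred_sets[OF locP])
  have summ: "summable (\<lambda>j. R.prob {w \<in> space RRT. P j w})"
    by (rule summable_comparison_test'[OF sf, of 0]) (use bnd in simp)
  have "AE w in RRT. eventually (\<lambda>j. w \<in> space RRT - {w \<in> space RRT. P j w}) sequentially"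
    by (rule borel_cantelli_AE1) (use sets summ in \<open>auto simp: R.emeasure_eq_measure\<close>)
  then show ?thesis by simp
qed

lemma B1_AE:
  assumes t: "0 < t" and d: "0 < \<delta>" and td: "t + \<delta> < 1"
  shows "AE w in RRT. eventually (\<lambda>j. \<not> B1 k t \<delta> j w) sequentially"
proof -
  define c where "c = 1 - exp (-\<delta>)"
  define g where "g = ln 2 * (c * (t + \<delta>) - \<delta> * t)"
  define C0 where "C0 = \<delta> * t * ln 2 + c * ln 2 + c * (1 - t - \<delta>) * ln 2"
  have "exp (-\<delta>) \<le> 1 / (1 + \<delta>)"
  proof -
    have "1 + \<delta> \<le> exp \<delta>" by (rule exp_ge_add_one_self)
    then have "1 / exp \<delta> \<le> 1 / (1 + \<delta>)" using d by (intro divide_left_mono) auto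
    then show ?thesis by (simp add: exp_minus divide_inverse)
  qed
  then have cge: "\<delta> / (1 + \<delta>) \<le> c" unfolding c_def using d by (simp add: field_simps)
  have "\<delta> * (t + \<delta>) / (1 + \<delta>) \<le> c * (t + \<delta>)"
    using mult_right_mono[OF cge, of "t + \<delta>"] t d by simp
  moreover have "\<delta> * (t + \<delta>) / (1 + \<delta>) - \<delta> * t = \<delta> * \<delta> * (1 - t) / (1 + \<delta>)"
    using d by (simp add: field_simps)
  moreover have "0 < \<delta> * \<delta> * (1 - t) / (1 + \<delta>)" using d td t by simp
  ultimately have "0 < c * (t + \<delta>) - \<delta> * t" by linarith
  then have g: "0 < g" unfolding g_def by simp
  show ?thesis
  proof (rule AE_from_summable[OF loc_B1])
    fix j
    have "\<delta> * t * real (Suc j) * ln 2 - (1 - exp (-\<delta>)) * (real j * ln 2 - ln 2 - real (Suc j) * (1 - t - \<delta>) * ln 2)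
        = C0 - g * real j" by (simp add: c_def g_def C0_def algebra_simps)
    then show "R.prob {w \<in> space RRT. B1 k t \<delta> j w} \<le> (1 + (real j + 1) * ln 2) ^ k * exp (C0 - g * real j)"
      using B1_prob[OF t d td, of k j] by simp
  next
    show "summable (\<lambda>j. (1 + (real j + 1) * ln 2) ^ k * exp (C0 - g * real j))"
      by (rule summable_poly_exp[OF g]) simp
  qed
qed

lemma B2_AE:
  assumes t: "0 < t" "t < 1" and d: "0 < \<delta>" "\<delta> < t"
  shows "AE w in RRT. eventually (\<lambda>j. \<not> B2 k t \<delta> j w) sequentially"
proof -
  define \<theta> where "\<theta> = \<delta> / 2"
  have th: "0 < \<theta>" "\<theta> < 1" using d t by (auto simp: \<theta>_def)
  define c where "c = exp \<theta> - 1"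
  define g where "g = ln 2 * (\<theta> * t - c * (t - \<delta>))"
  define C0 where "C0 = \<theta> + c * ln 2"
  have "exp \<theta> \<le> 1 / (1 - \<theta>)"
  proof -
    have "1 + (-\<theta>) \<le> exp (-\<theta>)" by (rule exp_ge_add_one_self)
    then have "1 / exp (-\<theta>) \<le> 1 / (1 - \<theta>)" using th by (intro divide_left_mono) auto
    then show ?thesis by (simp add: exp_minus divide_inverse)
  qed
  then have cle: "c \<le> \<theta> / (1 - \<theta>)" unfolding c_def using th by (simp add: field_simps)
  have "c * (t - \<delta>) \<le> \<theta> / (1 - \<theta>) * (t - \<delta>)"
    using mult_right_mono[OF cle, of "t - \<delta>"] d by simp
  moreover have "\<theta> * t - \<theta> / (1 - \<theta>) * (t - \<delta>) = \<theta> * (\<delta> - \<theta> * t) / (1 - \<theta>)"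
    using th by (simp add: field_simps)
  moreover have "0 < \<theta> * (\<delta> - \<theta> * t) / (1 - \<theta>)"
  proof -
    have "\<theta> * t < \<delta>" using d t by (simp add: \<theta>_def)
    then show ?thesis using th by simp
  qed
  ultimately have "0 < \<theta> * t - c * (t - \<delta>)" by linarith
  then have g: "0 < g" unfolding g_def by simp
  show ?thesis
  proof (rule AE_from_summable[OF loc_B2])
    fix j
    have "- \<theta> * (t * real j * ln 2 - 1) + (exp \<theta> - 1) * (real (Suc j) * ln 2 - real j * (1 - t + \<delta>) * ln 2)
        = C0 - g * real j" by (simp add: c_def g_def C0_def algebra_simps)
    then show "R.prob {w \<in> space RRT. B2 k t \<delta> j w} \<le> (1 + (real j + 1) * ln 2) ^ k * exp (C0 - g * real j)"
      using B2_prob[OF t d th(1), of k j] by simp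
  next
    show "summable (\<lambda>j. (1 + (real j + 1) * ln 2) ^ k * exp (C0 - g * real j))"
      by (rule summable_poly_exp[OF g]) simp
  qed
qed


definition cnt :: "(nat \<Rightarrow> nat) \<Rightarrow> nat \<Rightarrow> nat \<Rightarrow> real \<Rightarrow> nat" where
  "cnt w n k t = card {i. i \<le> n \<and> i \<in> level w n k \<and> real (deg w n i) > t * ln (real n)}"

lemma Z_eq: "Z w n k t = real (cnt w n k t) / real (NN w k n)"
  by (simp add: Z_def cnt_def NN_level)

lemma nat_floor_le: "0 \<le> x \<Longrightarrow> i \<le> nat \<lfloor>x\<rfloor> \<longleftrightarrow> real i \<le> x"
  by linarith

lemma pow2_real: "real ((2::nat) ^ m) = 2 powr real m"
  by (simp add: powr_realpow)

lemma cnt_bounds: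
  assumes t: "0 < t" "t < 1" and d: "0 < \<delta>" "\<delta> < t" "t + \<delta> < 1" and s: "supp w"
    and ev: "eventually (\<lambda>j. \<not> B1 k t \<delta> j w \<and> \<not> B2 k t \<delta> j w) sequentially"
  shows "eventually (\<lambda>n. NN w k (nat \<lfloor>real n powr (1 - t - \<delta>)\<rfloor>) \<le> cnt w n k t
            \<and> cnt w n k t \<le> NN w k (nat \<lfloor>real n powr (1 - t + \<delta>)\<rfloor>)) sequentially"
proof -
  define s1 where "s1 = 1 - t - \<delta>"
  define s2 where "s2 = 1 - t + \<delta>"
  have s1: "0 < s1" "s1 < 1" using t d by (auto simp: s1_def)
  have s2: "0 < s2" "s2 < 1" using t d by (auto simp: s2_def)
  have "eventually (\<lambda>j::nat. real (Suc j) * s1 \<le> real j) sequentially" using s1 by real_asymp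
  with ev have "eventually (\<lambda>j. \<not> B1 k t \<delta> j w \<and> \<not> B2 k t \<delta> j w \<and> real (Suc j) * s1 \<le> real j) sequentially"
    by eventually_elim auto
  then obtain J0 where J0: "\<And>j. j \<ge> J0 \<Longrightarrow> \<not> B1 k t \<delta> j w \<and> \<not> B2 k t \<delta> j w \<and> real (Suc j) * s1 \<le> real j"
    by (auto simp: eventually_sequentially)
  show ?thesis unfolding eventually_sequentially
  proof (intro exI[of _ "2 ^ J0"] allI impI)
    fix n :: nat assume n: "2 ^ J0 \<le> n"
    have "(1::nat) \<le> 2 ^ J0" by simp
    then have n1: "1 \<le> n" using n by linarith
    obtain j where j: "2 ^ j \<le> n" "n < 2 ^ (j + 1)" using ex_power_ivl1[of 2 n] n1 by auto
    have jJ: "J0 \<le> j"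
    proof (rule ccontr)
      assume "\<not> J0 \<le> j"
      then have "2 ^ (j + 1) \<le> (2::nat) ^ J0" by (intro power_increasing) auto
      then show False using j n by simp
    qed
    note G = J0[OF jJ]
    have nr: "1 \<le> real n" using n1 by simp
    have lnn_up: "ln (real n) < real (Suc j) * ln 2"
    proof -
      have "real n < real ((2::nat) ^ Suc j)" using j(2) by (simp del: of_nat_power)
      then have "ln (real n) < ln (real ((2::nat) ^ Suc j))" using nr by (subst ln_less_cancel_iff) auto
      then show ?thesis using ln_realpow[of 2 "Suc j"] by simp
    qed
    have lnn_lo: "real j * ln 2 \<le> ln (real n)"
    proof -
      have "real ((2::nat) ^ j) \<le> real n" using j(1) by (simp del: of_nat_power)
      then have "ln (real ((2::nat) ^ j)) \<le> ln (real n)" by (rule ln_mono) simp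
      then show ?thesis using ln_realpow[of 2 j] by simp
    qed
    define S where "S = {i. i \<le> n \<and> i \<in> level w n k \<and> real (deg w n i) > t * ln (real n)}"
    have finS: "finite S" unfolding S_def by simp
    have lower: "{i. i \<le> nat \<lfloor>real n powr s1\<rfloor> \<and> depth w i = k} \<subseteq> S"
    proof
      fix i assume "i \<in> {i. i \<le> nat \<lfloor>real n powr s1\<rfloor> \<and> depth w i = k}"
      then have i: "real i \<le> real n powr s1" "depth w i = k" using nat_floor_le[of "real n powr s1" i] by auto
      have "real n powr s1 \<le> real n powr 1" using nr s1 by (intro powr_mono) auto
      then have "i \<le> n" using i by simp
      have "real n powr s1 \<le> real ((2::nat) ^ Suc j) powr s1"
      proof -
        have nle: "real n \<le> real ((2::nat) ^ Suc j)" by (metis j(2) Suc_eq_plus1 less_imp_le of_nat_le_iff)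
        show ?thesis using nle s1 by (intro powr_mono2) auto
      qed
      also have "\<dots> = 2 powr (real (Suc j) * s1)" by (simp only: pow2_real powr_powr)
      finally have i2: "real i \<le> 2 powr (real (Suc j) * s1)" using i by simp
      also have "\<dots> \<le> 2 powr real j" using G by (intro powr_mono) auto
      finally have "real i \<le> 2 powr real j" .
      then have ij: "i \<le> 2 ^ j" by (simp add: pow2_real[symmetric] del: of_nat_power)
      have "\<not> real (Cc w i (2 ^ j)) \<le> t * real (Suc j) * ln 2"
        using G ij i i2 unfolding B1_def s1_def by blast
      then have "t * real (Suc j) * ln 2 < real (Cc w i (2 ^ j))" by simp
      also have "\<dots> \<le> real (Cc w i n)" using Cc_mono[OF j(1)] by simp
      also have "\<dots> \<le> real (deg w n i)" using deg_ge[OF s] by simp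
      finally have "t * real (Suc j) * ln 2 < real (deg w n i)" .
      moreover have "t * ln (real n) \<le> t * (real (Suc j) * ln 2)" using lnn_up t by (intro mult_left_mono) auto
      ultimately show "i \<in> S" unfolding S_def level_def using \<open>i \<le> n\<close> i by (auto simp: mult.assoc)
    qed
    have upper: "S \<subseteq> {i. i \<le> nat \<lfloor>real n powr s2\<rfloor> \<and> depth w i = k}"
    proof
      fix i assume iS: "i \<in> S"
      then have i: "i \<le> n" "depth w i = k" "t * ln (real n) < real (deg w n i)"
        by (auto simp: S_def level_def)
      have "i \<le> nat \<lfloor>real n powr s2\<rfloor>"
      proof (rule ccontr)
        assume "\<not> i \<le> nat \<lfloor>real n powr s2\<rfloor>"
        then have x: "real n powr s2 \<le> real i" using nat_floor_le[of "real n powr s2" i] by auto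
        have "2 powr (real j * s2) = real ((2::nat) ^ j) powr s2" by (simp only: pow2_real powr_powr)
        also have "\<dots> \<le> real n powr s2" using j(1) s2 by (intro powr_mono2) (auto simp del: of_nat_power)
        finally have x2: "2 powr (real j * s2) \<le> real i" using x by simp
        have iM: "i \<le> 2 ^ Suc j" using i(1) j(2) by simp
        have "\<not> t * real j * ln 2 - 1 \<le> real (Cc w i (2 ^ Suc j))"
          using G iM x2 i(2) unfolding B2_def s2_def by blast
        then have "1 + real (Cc w i (2 ^ Suc j)) < t * real j * ln 2" by simp
        moreover have "real (deg w n i) \<le> 1 + real (Cc w i n)" using deg_le[OF s, of n i] by simp
        moreover have "real (Cc w i n) \<le> real (Cc w i (2 ^ Suc j))" using Cc_mono[of n "2 ^ Suc j"] j(2) by simp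
        moreover have "t * (real j * ln 2) \<le> t * ln (real n)" using lnn_lo t by (intro mult_left_mono) auto
        ultimately show False using i(3) by (simp add: mult.assoc)
      qed
      then show "i \<in> {i. i \<le> nat \<lfloor>real n powr s2\<rfloor> \<and> depth w i = k}" using i by simp
    qed
    have "NN w k (nat \<lfloor>real n powr s1\<rfloor>) \<le> card S"
      unfolding NN_def by (rule card_mono[OF finS lower])
    moreover have "card S \<le> NN w k (nat \<lfloor>real n powr s2\<rfloor>)"
      unfolding NN_def by (rule card_mono[OF _ upper]) simp
    ultimately show "NN w k (nat \<lfloor>real n powr (1 - t - \<delta>)\<rfloor>) \<le> cnt w n k t \<and> cnt w n k t \<le> NN w k (nat \<lfloor>real n powr (1 - t + \<delta>)\<rfloor>)"
      by (simp add: cnt_def S_def s1_def s2_def)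
  qed
qed

lemma squeeze_family:
  fixes Z :: "nat \<Rightarrow> real" and lo hi :: "nat \<Rightarrow> nat \<Rightarrow> real" and l u :: "nat \<Rightarrow> real"
  assumes ev: "\<And>r. eventually (\<lambda>n. lo r n \<le> Z n \<and> Z n \<le> hi r n) sequentially"
    and lol: "\<And>r. lo r \<longlonglongrightarrow> l r" and hil: "\<And>r. hi r \<longlonglongrightarrow> u r"
    and l: "l \<longlonglongrightarrow> L" and u: "u \<longlonglongrightarrow> L"
  shows "Z \<longlonglongrightarrow> L"
proof (rule order_tendstoI)
  fix a assume a: "a < L"
  obtain r where r: "a < l r" using order_tendstoD(1)[OF l a] by (auto simp: eventually_sequentially)
  have "eventually (\<lambda>n. a < lo r n) sequentially" by (rule order_tendstoD(1)[OF lol r])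
  with ev[of r] show "eventually (\<lambda>n. a < Z n) sequentially" by eventually_elim auto
next
  fix b assume b: "L < b"
  obtain r where r: "u r < b" using order_tendstoD(2)[OF u b] by (auto simp: eventually_sequentially)
  have "eventually (\<lambda>n. hi r n < b) sequentially" by (rule order_tendstoD(2)[OF hil r])
  with ev[of r] show "eventually (\<lambda>n. Z n < b) sequentially" by eventually_elim auto
qed

definition dd :: "real \<Rightarrow> nat \<Rightarrow> real" where
  "dd t r = min t (1 - t) / real (r + 2)"

lemma dd_props:
  assumes "0 < t" "t < 1"
  shows "0 < dd t r" "dd t r < t" "t + dd t r < 1"
proof -
  define mm where "mm = min t (1 - t)"
  have m: "0 < mm" "mm \<le> t" "mm \<le> 1 - t" using assms by (auto simp: mm_def)
  have d: "dd t r = mm / real (r + 2)" by (simp add: dd_def mm_def)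
  have le: "mm / real (r + 2) \<le> mm / 2" using m by (intro divide_left_mono) auto
  show "0 < dd t r" unfolding d using m by simp
  show "dd t r < t" unfolding d using le m by linarith
  show "t + dd t r < 1" unfolding d using le m by linarith
qed

lemma dd_lim: "(\<lambda>r. dd t r) \<longlonglongrightarrow> 0"
proof -
  have "(\<lambda>r::nat. c / real (r + 2)) \<longlonglongrightarrow> 0" for c :: real by real_asymp
  then show ?thesis by (simp add: dd_def)
qed

lemma final_path:
  assumes k: "1 \<le> k" and t: "0 < t" "t < 1" and s: "supp w"
    and lev: "(\<lambda>n. real (NN w k n) / harm n ^ k) \<longlonglongrightarrow> 1 / fact k"
    and good: "\<And>r. eventually (\<lambda>j. \<not> B1 k t (dd t r) j w \<and> \<not> B2 k t (dd t r) j w) sequentially"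
  shows "(\<lambda>n. Z w n k t) \<longlonglongrightarrow> (1 - t) ^ k"
proof (rule squeeze_family)
  fix r
  note D = dd_props[OF t, of r]
  show "eventually (\<lambda>n. real (NN w k (nat \<lfloor>real n powr (1 - t - dd t r)\<rfloor>)) / real (NN w k n) \<le> Z w n k t
      \<and> Z w n k t \<le> real (NN w k (nat \<lfloor>real n powr (1 - t + dd t r)\<rfloor>)) / real (NN w k n)) sequentially"
    using cnt_bounds[OF t D(1) D(2) D(3) s good]
  proof eventually_elim
    case (elim n)
    then show ?case unfolding Z_eq by (auto intro!: divide_right_mono)
  qed
  have c: "1 / fact k \<noteq> (0::real)" by simp
  show "(\<lambda>n. real (NN w k (nat \<lfloor>real n powr (1 - t - dd t r)\<rfloor>)) / real (NN w k n)) \<longlonglongrightarrow> (1 - t - dd t r) ^ k"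
    by (rule ratio_lim[OF lev c floor_pow_tendsto harm_floor_ratio]) (use D in auto)
  show "(\<lambda>n. real (NN w k (nat \<lfloor>real n powr (1 - t + dd t r)\<rfloor>)) / real (NN w k n)) \<longlonglongrightarrow> (1 - t + dd t r) ^ k"
    by (rule ratio_lim[OF lev c floor_pow_tendsto harm_floor_ratio]) (use D t in auto)
next
  have "(\<lambda>r. (1 - t - dd t r) ^ k) \<longlonglongrightarrow> (1 - t - 0) ^ k" by (intro tendsto_intros dd_lim)
  then show "(\<lambda>r. (1 - t - dd t r) ^ k) \<longlonglongrightarrow> (1 - t) ^ k" by simp
  have "(\<lambda>r. (1 - t + dd t r) ^ k) \<longlonglongrightarrow> (1 - t + 0) ^ k" by (intro tendsto_intros dd_lim)
  then show "(\<lambda>r. (1 - t + dd t r) ^ k) \<longlonglongrightarrow> (1 - t) ^ k" by simp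
qed

theorem theorem2p1:
  fixes k :: nat and t :: real
  assumes "1 \<le> k" and "0 < t" and "t < 1"
  shows "AE \<omega> in RRT. (\<lambda>n. Z \<omega> n k t) \<longlonglongrightarrow> (1 - t) ^ k"
proof -
  have g1: "AE w in RRT. \<forall>r. eventually (\<lambda>j. \<not> B1 k t (dd t r) j w) sequentially"
    unfolding AE_all_countable using dd_props[OF assms(2,3)] assms by (intro allI B1_AE) auto
  have g2: "AE w in RRT. \<forall>r. eventually (\<lambda>j. \<not> B2 k t (dd t r) j w) sequentially"
    unfolding AE_all_countable using dd_props[OF assms(2,3)] assms by (intro allI B2_AE) auto
  show ?thesis
    using AE_supp level_asym g1 g2
  proof eventually_elim
    case (elim w)
    show ?case
    proof (rule final_path[OF assms(1) assms(2) assms(3) elim(1) elim(2)[rule_format, of k]])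
      fix r show "eventually (\<lambda>j. \<not> B1 k t (dd t r) j w \<and> \<not> B2 k t (dd t r) j w) sequentially"
        using elim(3)[rule_format, of r] elim(4)[rule_format, of r] by eventually_elim auto
    qed
  qed
qed


end
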